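(* Let $b\in\mathbb R^d$, $\mu,\nu\in\mathcal P_2^b(\mathbb R^d)$, $\overline u$ an optimal potential for $Z_2(\mu,\nu)$, $\overline\zeta(x,y)=\frac{x+y}2+\frac{\nabla\overline u(x)-\nabla\overline u(y)}2$, $\gamma\in\overline\Gamma(\mu,\nu)$, and $\gamma_i=(\pi_i,\overline\zeta)\#\gamma$ for $i=1,2$. With disintegrations $\gamma=\mu(dx)\otimes\gamma_x(dy)=\gamma_y(dx)\otimes\nu(dy)$, $\gamma_1=\mu(dx)\otimes\gamma^1_x(dz)$, $\gamma_2=\nu(dy)\otimes\gamma^2_y(dz)$, one has $$Z_2(\mu,\nu)=\int\tfrac12W_2^2(\gamma_x,\gamma^1_x)\,\mu(dx)+\int\tfrac12W_2^2(\gamma_y,\gamma^2_y)\,\nu(dy).$$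
   Context: $\mathcal P_2^b(\mathbb R^d)$: probability measures with finite second moment and barycentre $b$. $W_2$: quadratic Wasserstein distance. $X,Y$: supports of $\mu,\nu$. $\Gamma(\mu,\nu)$: probabilities on $X\times Y$ with marginals $\mu,\nu$. $Q(\mu,\nu)$: finite $\mathbb R^d$-valued Borel measures $q$ on $X\times Y$ with $\int\langle\Phi(x),q(dxdy)\rangle=\int\langle\Phi(x),x\rangle\mu(dx)$, $\int\langle\Psi(y),q(dxdy)\rangle=\int\langle\Psi(y),y\rangle\nu(dy)$ for all bounded Borel $\Phi,\Psi$. $Z_2(\mu,\nu)=\max\{\int u\,d(\mu-\nu):u\in C^{1,1}(\mathbb R^d),\mathrm{lip}(\nabla u)\le1\}$; maximizers are optimal potentials. $\overline\Gamma(\mu,\nu)=\{\gamma\in\Gamma(\mu,\nu):\overline\zeta\gamma\in Q(\mu,\nu)\}$. $\pi_1(x,y)=x$, $\pi_2(x,y)=y$; $\#$ is push-forward. *)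

theory Defs
  imports "HOL-Probability.Probability"
begin

text \<open>R^d is modelled by an arbitrary Euclidean space 'a (dimension DIM('a)).
  Measures on 'a and on 'a \<times> 'a are Borel measures.\<close>

definition P2b :: "'a::euclidean_space \<Rightarrow> 'a measure set" where
  "P2b b = {M. prob_space M \<and> sets M = sets borel \<and>
              integrable M (\<lambda>x. norm x ^ 2) \<and> (\<integral>x. x \<partial>M) = b}"

definition msupp :: "'a::topological_space measure \<Rightarrow> 'a set" where
  "msupp M = {x. \<forall>U. open U \<and> x \<in> U \<longrightarrow> emeasure M U > 0}"

definition couplings :: "'a::euclidean_space measure \<Rightarrow> 'b::euclidean_space measure
    \<Rightarrow> ('a \<times> 'b) measure set" where
  "couplings \<mu> \<nu> = {\<gamma>. prob_space \<gamma> \<and> sets \<gamma> = sets borel \<and>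
                       distr \<gamma> borel fst = \<mu> \<and> distr \<gamma> borel snd = \<nu>}"

definition W2sq :: "'a::euclidean_space measure \<Rightarrow> 'a measure \<Rightarrow> ennreal" where
  "W2sq \<mu> \<nu> = (INF \<gamma>\<in>couplings \<mu> \<nu>. \<integral>\<^sup>+p. ennreal (norm (fst p - snd p) ^ 2) \<partial>\<gamma>)"

definition Gamma :: "'a::euclidean_space measure \<Rightarrow> 'a measure \<Rightarrow> ('a \<times> 'a) measure set" where
  "Gamma \<mu> \<nu> = {\<gamma>\<in>couplings \<mu> \<nu>. AE p in \<gamma>. p \<in> msupp \<mu> \<times> msupp \<nu>}"

definition grad_lip1 :: "('a::euclidean_space \<Rightarrow> real) \<Rightarrow> ('a \<Rightarrow> 'a) \<Rightarrow> bool" where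
  "grad_lip1 u g \<longleftrightarrow> (\<forall>x. (u has_derivative (\<lambda>h. g x \<bullet> h)) (at x)) \<and>
                      (\<forall>x y. norm (g x - g y) \<le> norm (x - y))"

text \<open>Z_2(\<mu>,\<nu>) = sup of \<integral> u d(\<mu>-\<nu>) over such u (the paper shows it is a max).\<close>
definition Z2 :: "'a::euclidean_space measure \<Rightarrow> 'a measure \<Rightarrow> real" where
  "Z2 \<mu> \<nu> = Sup {(\<integral>x. u x \<partial>\<mu>) - (\<integral>x. u x \<partial>\<nu>) | u. \<exists>g. grad_lip1 u g}"

definition optimal_potential :: "'a::euclidean_space measure \<Rightarrow> 'a measure
    \<Rightarrow> ('a \<Rightarrow> real) \<Rightarrow> ('a \<Rightarrow> 'a) \<Rightarrow> bool" where
  "optimal_potential \<mu> \<nu> u g \<longleftrightarrow> grad_lip1 u g \<and>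
      (\<integral>x. u x \<partial>\<mu>) - (\<integral>x. u x \<partial>\<nu>) = Z2 \<mu> \<nu>"

text \<open>The vector measure f\<gamma> (density f w.r.t. \<gamma>) belongs to Q(\<mu>,\<nu>): it is a finite
  R^d-valued Borel measure on X \<times> Y (f is \<gamma>-integrable, \<gamma> lives on X \<times> Y) and
  its moment conditions hold for all bounded Borel \<Phi>, \<Psi>.\<close>
definition density_in_Q :: "'a::euclidean_space measure \<Rightarrow> 'a measure \<Rightarrow> ('a \<times> 'a) measure
    \<Rightarrow> ('a \<times> 'a \<Rightarrow> 'a) \<Rightarrow> bool" where
  "density_in_Q \<mu> \<nu> \<gamma> f \<longleftrightarrow> integrable \<gamma> f \<and>
     (AE p in \<gamma>. p \<in> msupp \<mu> \<times> msupp \<nu>) \<and>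
     (\<forall>\<Phi>::'a \<Rightarrow> 'a. \<Phi> \<in> borel_measurable borel \<and> bounded (range \<Phi>) \<longrightarrow>
        (\<integral>p. \<Phi> (fst p) \<bullet> f p \<partial>\<gamma>) = (\<integral>x. \<Phi> x \<bullet> x \<partial>\<mu>)) \<and>
     (\<forall>\<Psi>::'a \<Rightarrow> 'a. \<Psi> \<in> borel_measurable borel \<and> bounded (range \<Psi>) \<longrightarrow>
        (\<integral>p. \<Psi> (snd p) \<bullet> f p \<partial>\<gamma>) = (\<integral>y. \<Psi> y \<bullet> y \<partial>\<nu>))"

definition zeta :: "('a::euclidean_space \<Rightarrow> 'a) \<Rightarrow> 'a \<times> 'a \<Rightarrow> 'a" where
  "zeta g p = (1/2) *\<^sub>R (fst p + snd p) + (1/2) *\<^sub>R (g (fst p) - g (snd p))"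

definition Gamma_bar :: "'a::euclidean_space measure \<Rightarrow> 'a measure \<Rightarrow> ('a \<Rightarrow> 'a)
    \<Rightarrow> ('a \<times> 'a) measure set" where
  "Gamma_bar \<mu> \<nu> g = {\<gamma>\<in>Gamma \<mu> \<nu>. density_in_Q \<mu> \<nu> \<gamma> (zeta g)}"

definition disint_fst :: "'a::euclidean_space measure \<Rightarrow> ('a \<Rightarrow> 'b::euclidean_space measure)
    \<Rightarrow> ('a \<times> 'b) measure \<Rightarrow> bool" where
  "disint_fst M K \<gamma> \<longleftrightarrow> K \<in> measurable M (prob_algebra borel) \<and>
     (\<forall>A\<in>sets borel. emeasure \<gamma> A = (\<integral>\<^sup>+x. emeasure (K x) (Pair x -` A) \<partial>M))"

definition disint_snd :: "'b::euclidean_space measure \<Rightarrow> ('b \<Rightarrow> 'a::euclidean_space measure)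
    \<Rightarrow> ('a \<times> 'b) measure \<Rightarrow> bool" where
  "disint_snd N K \<gamma> \<longleftrightarrow> K \<in> measurable N (prob_algebra borel) \<and>
     (\<forall>A\<in>sets borel. emeasure \<gamma> A = (\<integral>\<^sup>+y. emeasure (K y) ((\<lambda>x. (x, y)) -` A) \<partial>N))"

end

theory Submission
  imports Defs
begin
lemma c11_bound:
  fixes u :: "'a::euclidean_space \<Rightarrow> real"
  assumes "grad_lip1 u g"
  shows "\<bar>u z - u x - g x \<bullet> (z - x)\<bar> \<le> (1/2) * norm (z - x) ^ 2"
proof -
  define d where "d = z - x"
  have der: "\<And>t. ((\<lambda>t. u (x + t *\<^sub>R d)) has_real_derivative (g (x + t *\<^sub>R d) \<bullet> d)) (at t)"
  proof -
    fix t :: real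
    have l: "((\<lambda>t. x + t *\<^sub>R d) has_derivative (\<lambda>s. s *\<^sub>R d)) (at t)"
      by (auto intro!: derivative_eq_intros)
    have "(u has_derivative (\<lambda>h. g (x + t *\<^sub>R d) \<bullet> h)) (at (x + t *\<^sub>R d))"
      using assms unfolding grad_lip1_def by blast
    from has_derivative_compose[OF l this]
    have "((\<lambda>t. u (x + t *\<^sub>R d)) has_derivative (\<lambda>s. s * (g (x + t *\<^sub>R d) \<bullet> d))) (at t)"
      by (simp add: inner_scaleR_right)
    moreover have "(\<lambda>s. s * (g (x + t *\<^sub>R d) \<bullet> d)) = (*) (g (x + t *\<^sub>R d) \<bullet> d)"
      by (rule ext) (simp add: mult.commute)
    ultimately show "?thesis t" unfolding has_field_derivative_def by simp
  qed
  have lip: "\<And>t. 0 \<le> t \<Longrightarrow> norm (g (x + t *\<^sub>R d) - g x) \<le> t * norm d"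
    using assms unfolding grad_lip1_def by (metis add_diff_cancel_left' norm_scaleR abs_of_nonneg)
  have up: "u (x + 1 *\<^sub>R d) - 1 * (g x \<bullet> d) - 1^2 * norm d ^ 2 / 2 \<le> u (x + 0 *\<^sub>R d) - 0 * (g x \<bullet> d) - 0^2 * norm d ^ 2 / 2"
  proof (rule DERIV_nonpos_imp_nonincreasing[where f = "\<lambda>t. u (x + t *\<^sub>R d) - t * (g x \<bullet> d) - t^2 * norm d ^ 2 / 2"])
    fix t :: real assume t: "0 \<le> t" "t \<le> 1"
    have "((\<lambda>t. u (x + t *\<^sub>R d) - t * (g x \<bullet> d) - t^2 * norm d ^ 2 / 2) has_real_derivative
        (g (x + t *\<^sub>R d) \<bullet> d - g x \<bullet> d - t * norm d ^ 2)) (at t)"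
      by (auto intro!: derivative_eq_intros der)
    moreover have "g (x + t *\<^sub>R d) \<bullet> d - g x \<bullet> d - t * norm d ^ 2 \<le> 0"
    proof -
      have "g (x + t *\<^sub>R d) \<bullet> d - g x \<bullet> d = (g (x + t *\<^sub>R d) - g x) \<bullet> d" by (simp add: inner_diff_left)
      also have "\<dots> \<le> norm (g (x + t *\<^sub>R d) - g x) * norm d" by (rule norm_cauchy_schwarz)
      also have "\<dots> \<le> t * norm d * norm d" using lip[OF t(1)] by (simp add: mult_right_mono)
      finally show ?thesis by (simp add: power2_eq_square)
    qed
    ultimately show "\<exists>y. ((\<lambda>t. u (x + t *\<^sub>R d) - t * (g x \<bullet> d) - t^2 * norm d ^ 2 / 2) has_real_derivative y) (at t) \<and> y \<le> 0" by blast
  qed simp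
  have lo: "u (x + 1 *\<^sub>R d) - 1 * (g x \<bullet> d) + 1^2 * norm d ^ 2 / 2 \<ge> u (x + 0 *\<^sub>R d) - 0 * (g x \<bullet> d) + 0^2 * norm d ^ 2 / 2"
  proof (rule DERIV_nonneg_imp_nondecreasing[where f = "\<lambda>t. u (x + t *\<^sub>R d) - t * (g x \<bullet> d) + t^2 * norm d ^ 2 / 2"])
    fix t :: real assume t: "0 \<le> t" "t \<le> 1"
    have "((\<lambda>t. u (x + t *\<^sub>R d) - t * (g x \<bullet> d) + t^2 * norm d ^ 2 / 2) has_real_derivative
        (g (x + t *\<^sub>R d) \<bullet> d - g x \<bullet> d + t * norm d ^ 2)) (at t)"
      by (auto intro!: derivative_eq_intros der)
    moreover have "g (x + t *\<^sub>R d) \<bullet> d - g x \<bullet> d + t * norm d ^ 2 \<ge> 0"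
    proof -
      have "g (x + t *\<^sub>R d) \<bullet> d - g x \<bullet> d = (g (x + t *\<^sub>R d) - g x) \<bullet> d" by (simp add: inner_diff_left)
      also have "\<dots> \<ge> - (norm (g (x + t *\<^sub>R d) - g x) * norm d)"
        using norm_cauchy_schwarz[of "g x - g (x + t *\<^sub>R d)" d] by (simp add: norm_minus_commute inner_diff_left)
      moreover have "norm (g (x + t *\<^sub>R d) - g x) * norm d \<le> t * norm d * norm d" using lip[OF t(1)] by (simp add: mult_right_mono)
      ultimately show ?thesis by (simp add: power2_eq_square)
    qed
    ultimately show "\<exists>y. ((\<lambda>t. u (x + t *\<^sub>R d) - t * (g x \<bullet> d) + t^2 * norm d ^ 2 / 2) has_real_derivative y) (at t) \<and> y \<ge> 0" by blast
  qed simp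
  have a1: "u z - u x - g x \<bullet> (z - x) \<le> (1/2) * norm (z - x) ^ 2" using up unfolding d_def by simp
  have a2: "-((1/2) * norm (z - x) ^ 2) \<le> u z - u x - g x \<bullet> (z - x)" using lo unfolding d_def by simp
  show ?thesis using a1 a2 by (intro abs_leI) linarith+
qed

lemma grad_lip1_props:
  fixes u :: "'a::euclidean_space \<Rightarrow> real"
  assumes "grad_lip1 u g"
  shows "continuous_on UNIV u" "continuous_on UNIV g"
    "u \<in> borel_measurable borel" "g \<in> borel_measurable borel"
    "\<And>x. norm (g x) \<le> norm (g 0) + norm x"
    "\<And>x. \<bar>u x\<bar> \<le> \<bar>u 0\<bar> + norm (g 0) * norm x + norm x ^ 2"
proof -
  show cu: "continuous_on UNIV u"
    using assms unfolding grad_lip1_def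
    by (metis continuous_at_imp_continuous_on has_derivative_continuous)
  have "1-lipschitz_on UNIV g"
    using assms unfolding grad_lip1_def by (intro lipschitz_onI) (auto simp: dist_norm)
  then show cg: "continuous_on UNIV g" by (rule lipschitz_on_continuous_on)
  show "u \<in> borel_measurable borel" "g \<in> borel_measurable borel"
    using cu cg by (auto intro: borel_measurable_continuous_onI)
  fix x
  have "norm (g x - g 0) \<le> norm x" using assms unfolding grad_lip1_def by (metis diff_zero)
  then show "norm (g x) \<le> norm (g 0) + norm x" by (metis add.commute diff_le_eq norm_triangle_ineq2 order_trans)
  have c0: "\<bar>u x - u 0 - g 0 \<bullet> (x - 0)\<bar> \<le> (1/2) * norm (x - 0) ^ 2" by (rule c11_bound[OF assms])
  have c: "\<bar>u x - u 0 - g 0 \<bullet> x\<bar> \<le> (1/2) * norm x ^ 2" using c0 by (simp only: diff_zero)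
  have h1: "\<bar>g 0 \<bullet> x\<bar> \<le> norm (g 0) * norm x" by (rule Cauchy_Schwarz_ineq2)
  have h2: "0 \<le> norm x ^ 2" by (rule zero_le_power2)
  show "\<bar>u x\<bar> \<le> \<bar>u 0\<bar> + norm (g 0) * norm x + norm x ^ 2" using c h1 h2 by linarith
qed

lemma P2bD:
  assumes "M \<in> P2b b"
  shows "prob_space M" "sets M = sets borel" "integrable M (\<lambda>x. norm x ^ 2)" "(\<integral>x. x \<partial>M) = b"
  using assms unfolding P2b_def by auto

lemma integrable_P2b:
  fixes f :: "'a::euclidean_space \<Rightarrow> 'b::{banach, second_countable_topology}"
  assumes M: "M \<in> P2b b" and f: "f \<in> borel_measurable borel"
    and bd: "\<And>x. norm (f x) \<le> C * (1 + norm x ^ 2)"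
  shows "integrable M f"
proof -
  interpret prob_space M using P2bD[OF M] by simp
  have s: "sets M = sets borel" using P2bD[OF M] by simp
  have "integrable M (\<lambda>x. C * (1 + norm x ^ 2))"
    using P2bD(3)[OF M] by auto
  moreover have "f \<in> borel_measurable M" by (subst measurable_cong_sets[OF s refl]) (rule f)
  ultimately show ?thesis
  proof (rule Bochner_Integration.integrable_bound)
    show "AE x in M. norm (f x) \<le> norm (C * (1 + norm x ^ 2))"
      by (intro AE_I2) (metis bd abs_ge_self order_trans real_norm_def)
  qed
qed

lemma integrable_P2b_id:
  assumes M: "M \<in> P2b (b::'a::euclidean_space)"
  shows "integrable M (\<lambda>x. x)"
proof (rule integrable_P2b[OF M, of _ 1])
  show "(\<lambda>x. x) \<in> borel_measurable borel" by simp
  fix x :: 'a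
  have h: "0 \<le> (norm x - 1) * (norm x - 1)" by simp
  have h0: "0 \<le> norm x" by simp
  have "norm x * 2 \<le> 1 + norm x * norm x" using h by (simp add: algebra_simps)
  then have "norm x \<le> 1 + norm x * norm x" using h0 by linarith
  then show "norm x \<le> 1 * (1 + norm x ^ 2)" by (simp add: power2_eq_square)
qed

lemma norm_le_1_sq: "norm (x::'a::real_normed_vector) \<le> 1 + norm x ^ 2"
proof -
  have h: "0 \<le> (norm x - 1) * (norm x - 1)" by simp
  have h0: "0 \<le> norm x" by simp
  have "norm x * 2 \<le> 1 + norm x * norm x" using h by (simp add: algebra_simps)
  then have "norm x \<le> 1 + norm x * norm x" using h0 by linarith
  then show ?thesis by (simp add: power2_eq_square)
qed

lemma pot_integrable:
  fixes u :: "'a::euclidean_space \<Rightarrow> real"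
  assumes M: "M \<in> P2b b" and u: "grad_lip1 u g"
  shows "integrable M u" "integrable M (\<lambda>x. x \<bullet> g x)" "integrable M g"
proof -
  note p = grad_lip1_props[OF u]
  show "integrable M u"
  proof (rule integrable_P2b[OF M p(3), of "\<bar>u 0\<bar> + norm (g 0) + 1"])
    fix x :: 'a
    have a: "\<bar>u x\<bar> \<le> \<bar>u 0\<bar> + norm (g 0) * norm x + norm x ^ 2" by (rule p(6))
    have b: "norm (g 0) * norm x \<le> norm (g 0) * (1 + norm x ^ 2)"
      by (rule mult_left_mono[OF norm_le_1_sq]) simp
    have c: "\<bar>u 0\<bar> \<le> \<bar>u 0\<bar> * (1 + norm x ^ 2)" by (simp add: mult_le_cancel_left1)
    have d: "norm x \<le> 1 + norm x ^ 2" by (rule norm_le_1_sq)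
    have e: "0 \<le> norm x ^ 2" by simp
    have "(\<bar>u 0\<bar> + norm (g 0) + 1) * (1 + norm x ^ 2) = \<bar>u 0\<bar> * (1 + norm x ^ 2) + norm (g 0) * (1 + norm x ^ 2) + (1 + norm x ^ 2)"
      by (simp add: algebra_simps)
    then show "norm (u x) \<le> (\<bar>u 0\<bar> + norm (g 0) + 1) * (1 + norm x ^ 2)"
      using a b c e by simp
  qed
  show "integrable M (\<lambda>x. x \<bullet> g x)"
  proof (rule integrable_P2b[OF M _, of _ "norm (g 0) + 1"])
    show "(\<lambda>x. x \<bullet> g x) \<in> borel_measurable borel" using p(4) by measurable
    fix x :: 'a
    have a: "\<bar>x \<bullet> g x\<bar> \<le> norm x * norm (g x)" by (rule Cauchy_Schwarz_ineq2)
    have a2: "norm x * norm (g x) \<le> norm x * (norm (g 0) + norm x)"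
      by (rule mult_left_mono[OF p(5)]) simp
    have b: "norm (g 0) * norm x \<le> norm (g 0) * (1 + norm x ^ 2)"
      by (rule mult_left_mono[OF norm_le_1_sq]) simp
    show "norm (x \<bullet> g x) \<le> (norm (g 0) + 1) * (1 + norm x ^ 2)"
      using a a2 b by (simp add: algebra_simps power2_eq_square)
  qed
  show "integrable M g"
  proof (rule integrable_P2b[OF M p(4), of "norm (g 0) + 1"])
    fix x :: 'a
    have b: "norm (g 0) \<le> norm (g 0) * (1 + norm x ^ 2)" by (simp add: mult_le_cancel_left1)
    have "(norm (g 0) + 1) * (1 + norm x ^ 2) = norm (g 0) * (1 + norm x ^ 2) + (1 + norm x ^ 2)"
      by (simp add: algebra_simps)
    then show "norm (g x) \<le> (norm (g 0) + 1) * (1 + norm x ^ 2)"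
      using p(5)[of x] b norm_le_1_sq[of x] by simp
  qed
qed

lemma pot_upper_bound:
  fixes v :: "'a::euclidean_space \<Rightarrow> real"
  assumes M: "M \<in> P2b b" and v: "grad_lip1 v h"
  shows "(\<integral>x. v x \<partial>M) - v b \<le> (1/2) * (\<integral>x. norm (x - b) ^ 2 \<partial>M)"
    "(\<integral>x. v x \<partial>M) - v b \<ge> - ((1/2) * (\<integral>x. norm (x - b) ^ 2 \<partial>M))"
proof -
  interpret prob_space M using P2bD[OF M] by simp
  note vi = pot_integrable[OF M v]
  have ix: "integrable M (\<lambda>x. x)" by (rule integrable_P2b_id[OF M])
  have ib: "integrable M (\<lambda>x. norm (x - b) ^ 2)"
  proof (rule integrable_P2b[OF M, of _ "2 + 2 * norm b ^ 2"])
    show "(\<lambda>x. norm (x - b) ^ 2) \<in> borel_measurable borel" by measurable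
    fix x :: 'a
    have "norm (x - b) \<le> norm x + norm b" by (rule norm_triangle_ineq4)
    then have "norm (x - b) ^ 2 \<le> (norm x + norm b) ^ 2" by (simp add: power_mono)
    also have "\<dots> \<le> 2 * norm x ^ 2 + 2 * norm b ^ 2"
      using sum_squares_bound[of "norm x" "norm b"] by (simp add: power2_eq_square algebra_simps)
    also have "\<dots> \<le> (2 + 2 * norm b ^ 2) * (1 + norm x ^ 2)"
      by (simp add: algebra_simps)
    finally show "norm (norm (x - b) ^ 2) \<le> (2 + 2 * norm b ^ 2) * (1 + norm x ^ 2)" by simp
  qed
  have ie: "integrable M (\<lambda>x. v x - v b - h b \<bullet> (x - b))"
    using vi(1) ix by (auto simp: inner_diff_right)
  have eq: "(\<integral>x. v x - v b - h b \<bullet> (x - b) \<partial>M) = (\<integral>x. v x \<partial>M) - v b"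
  proof -
    have "(\<integral>x. v x - v b - h b \<bullet> (x - b) \<partial>M) = (\<integral>x. v x - v b \<partial>M) - (\<integral>x. h b \<bullet> (x - b) \<partial>M)"
      using vi(1) ix by (intro Bochner_Integration.integral_diff) (auto simp: inner_diff_right)
    also have "(\<integral>x. h b \<bullet> (x - b) \<partial>M) = (\<integral>x. h b \<bullet> x \<partial>M) - (\<integral>x. h b \<bullet> b \<partial>M)"
      unfolding inner_diff_right using ix by (intro Bochner_Integration.integral_diff) auto
    also have "(\<integral>x. h b \<bullet> x \<partial>M) = h b \<bullet> b" using ix P2bD(4)[OF M] by simp
    also have "(\<integral>x. v x - v b \<partial>M) = (\<integral>x. v x \<partial>M) - v b"
      using vi(1) by (subst Bochner_Integration.integral_diff) (auto simp: prob_space)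
    finally show ?thesis by (simp add: prob_space)
  qed
  have pt: "\<And>x. \<bar>v x - v b - h b \<bullet> (x - b)\<bar> \<le> (1/2) * norm (x - b) ^ 2"
    by (rule c11_bound[OF v])
  have pt1: "\<And>x. v x - v b - h b \<bullet> (x - b) \<le> (1/2) * norm (x - b) ^ 2"
    using pt abs_le_D1 by blast
  have pt2: "\<And>x. - ((1/2) * norm (x - b) ^ 2) \<le> v x - v b - h b \<bullet> (x - b)"
    using pt abs_le_D2 by (metis minus_le_iff)
  have "(\<integral>x. v x - v b - h b \<bullet> (x - b) \<partial>M) \<le> (\<integral>x. (1/2) * norm (x - b) ^ 2 \<partial>M)"
    using ie ib pt1 pt2 by (intro integral_mono) auto
  then show "(\<integral>x. v x \<partial>M) - v b \<le> (1/2) * (\<integral>x. norm (x - b) ^ 2 \<partial>M)" using eq by simp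
  have "(\<integral>x. - ((1/2) * norm (x - b) ^ 2) \<partial>M) \<le> (\<integral>x. v x - v b - h b \<bullet> (x - b) \<partial>M)"
    using ie ib pt1 pt2 by (intro integral_mono) auto
  then show "(\<integral>x. v x \<partial>M) - v b \<ge> - ((1/2) * (\<integral>x. norm (x - b) ^ 2 \<partial>M))" using eq by simp
qed

lemma Z2_upper:
  fixes v :: "'a::euclidean_space \<Rightarrow> real"
  assumes M: "\<mu> \<in> P2b b" and N: "\<nu> \<in> P2b b" and v: "grad_lip1 v h"
  shows "(\<integral>x. v x \<partial>\<mu>) - (\<integral>x. v x \<partial>\<nu>) \<le> Z2 \<mu> \<nu>"
proof -
  let ?S = "{(\<integral>x. u x \<partial>\<mu>) - (\<integral>x. u x \<partial>\<nu>) | u. \<exists>g. grad_lip1 u g}"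
  have "bdd_above ?S"
  proof (rule bdd_aboveI)
    fix z assume "z \<in> ?S"
    then obtain w k where z: "z = (\<integral>x. w x \<partial>\<mu>) - (\<integral>x. w x \<partial>\<nu>)" and w: "grad_lip1 w k" by blast
    from pot_upper_bound[OF M w] pot_upper_bound[OF N w]
    show "z \<le> (1/2) * (\<integral>x. norm (x - b) ^ 2 \<partial>\<mu>) + (1/2) * (\<integral>x. norm (x - b) ^ 2 \<partial>\<nu>)"
      unfolding z by linarith
  qed
  moreover have "(\<integral>x. v x \<partial>\<mu>) - (\<integral>x. v x \<partial>\<nu>) \<in> ?S" using v by blast
  ultimately show ?thesis unfolding Z2_def by (intro cSup_upper) auto
qed

lemma dilate_grad_lip1:
  fixes u :: "'a::euclidean_space \<Rightarrow> real"
  assumes u: "grad_lip1 u g" and s: "s > 0"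
  shows "grad_lip1 (\<lambda>x. s^2 * u ((1/s) *\<^sub>R x)) (\<lambda>x. s *\<^sub>R g ((1/s) *\<^sub>R x))"
  unfolding grad_lip1_def
proof (intro conjI allI)
  fix x :: 'a
  have l: "((\<lambda>x. (1/s) *\<^sub>R x) has_derivative (\<lambda>h. (1/s) *\<^sub>R h)) (at x)"
    by (auto intro!: derivative_eq_intros)
  have "(u has_derivative (\<lambda>h. g ((1/s) *\<^sub>R x) \<bullet> h)) (at ((1/s) *\<^sub>R x))"
    using u unfolding grad_lip1_def by blast
  from has_derivative_compose[OF l this]
  have "((\<lambda>x. u ((1/s) *\<^sub>R x)) has_derivative (\<lambda>h. g ((1/s) *\<^sub>R x) \<bullet> ((1/s) *\<^sub>R h))) (at x)" .
  then have "((\<lambda>x. s^2 * u ((1/s) *\<^sub>R x)) has_derivative (\<lambda>h. s^2 * (g ((1/s) *\<^sub>R x) \<bullet> ((1/s) *\<^sub>R h)))) (at x)"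
    by (rule has_derivative_mult_right)
  moreover have "(\<lambda>h. s^2 * (g ((1/s) *\<^sub>R x) \<bullet> ((1/s) *\<^sub>R h))) = (\<lambda>h. (s *\<^sub>R g ((1/s) *\<^sub>R x)) \<bullet> h)"
    using s by (auto simp: fun_eq_iff power2_eq_square)
  ultimately show "((\<lambda>x. s^2 * u ((1/s) *\<^sub>R x)) has_derivative (\<lambda>h. (s *\<^sub>R g ((1/s) *\<^sub>R x)) \<bullet> h)) (at x)"
    by simp
next
  fix x y :: 'a
  have "norm (g ((1/s) *\<^sub>R x) - g ((1/s) *\<^sub>R y)) \<le> norm ((1/s) *\<^sub>R x - (1/s) *\<^sub>R y)"
    using u unfolding grad_lip1_def by blast
  also have "\<dots> = (1/s) * norm (x - y)" using s by (simp flip: scaleR_diff_right)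
  finally have "s * norm (g ((1/s) *\<^sub>R x) - g ((1/s) *\<^sub>R y)) \<le> s * ((1/s) * norm (x - y))"
    using s by (intro mult_left_mono) auto
  then show "norm (s *\<^sub>R g ((1/s) *\<^sub>R x) - s *\<^sub>R g ((1/s) *\<^sub>R y)) \<le> norm (x - y)"
    using s by (simp flip: scaleR_diff_right)
qed

lemma small_le_zero:
  fixes a K :: real
  assumes "\<And>t. 0 < t \<Longrightarrow> t < 1 \<Longrightarrow> a \<le> t * K"
  shows "a \<le> 0"
proof (rule ccontr)
  assume "\<not> a \<le> 0"
  then have a: "a > 0" by simp
  define t where "t = min (1/2) (a / (2 * (\<bar>K\<bar> + 1)))"
  have t0: "0 < t" using a unfolding t_def by (simp add: add_pos_nonneg)
  have t1: "t < 1" unfolding t_def by simp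
  have "t * K \<le> t * \<bar>K\<bar>" using t0 by (simp add: mult_left_mono)
  also have "\<dots> \<le> (a / (2 * (\<bar>K\<bar> + 1))) * \<bar>K\<bar>" unfolding t_def by (intro mult_right_mono) auto
  also have "\<dots> < a"
  proof -
    have "(a / (2 * (\<bar>K\<bar> + 1))) * \<bar>K\<bar> = a * (\<bar>K\<bar> / (2 * (\<bar>K\<bar> + 1)))" by simp
    also have "\<bar>K\<bar> / (2 * (\<bar>K\<bar> + 1)) < 1" by (simp add: field_simps)
    then have "a * (\<bar>K\<bar> / (2 * (\<bar>K\<bar> + 1))) < a * 1" using a by (intro mult_strict_left_mono) auto
    finally show ?thesis by simp
  qed
  finally show False using assms[OF t0 t1] by simp
qed

lemma dilation_ineq:
  fixes u :: "'a::euclidean_space \<Rightarrow> real"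
  assumes M: "\<mu> \<in> P2b b" and N: "\<nu> \<in> P2b b" and opt: "optimal_potential \<mu> \<nu> u g" and s: "s > 0"
  shows "s^2 * Z2 \<mu> \<nu> + s * (1 - s) * ((\<integral>x. x \<bullet> g x \<partial>\<mu>) - (\<integral>x. x \<bullet> g x \<partial>\<nu>))
          \<le> Z2 \<mu> \<nu> + (1/2) * (1 - s)^2 * ((\<integral>x. norm x ^ 2 \<partial>\<mu>) + (\<integral>x. norm x ^ 2 \<partial>\<nu>))"
proof -
  have u: "grad_lip1 u g" and Zeq: "(\<integral>x. u x \<partial>\<mu>) - (\<integral>x. u x \<partial>\<nu>) = Z2 \<mu> \<nu>"
    using opt unfolding optimal_potential_def by auto
  define w where "w = (\<lambda>x. s^2 * u ((1/s) *\<^sub>R x))"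
  have wl: "grad_lip1 w (\<lambda>x. s *\<^sub>R g ((1/s) *\<^sub>R x))" unfolding w_def by (rule dilate_grad_lip1[OF u s])
  define D where "D = (\<lambda>x. w x - s^2 * u x - s * (1 - s) * (x \<bullet> g x))"
  have Dbd: "\<bar>D x\<bar> \<le> (1/2) * (1 - s)^2 * norm x ^ 2" for x
  proof -
    have c: "\<bar>u ((1/s) *\<^sub>R x) - u x - g x \<bullet> ((1/s) *\<^sub>R x - x)\<bar> \<le> (1/2) * norm ((1/s) *\<^sub>R x - x) ^ 2"
      by (rule c11_bound[OF u])
    have e1: "(1/s) *\<^sub>R x - x = (1/s - 1) *\<^sub>R x" by (simp add: scaleR_diff_left)
    have e2: "g x \<bullet> ((1/s - 1) *\<^sub>R x) = (1/s - 1) * (x \<bullet> g x)" by (simp add: inner_commute)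
    have e3: "norm ((1/s - 1) *\<^sub>R x) ^ 2 = (1/s - 1)^2 * norm x ^ 2" by (simp add: power_mult_distrib)
    have c2: "\<bar>u ((1/s) *\<^sub>R x) - u x - (1/s - 1) * (x \<bullet> g x)\<bar> \<le> (1/2) * ((1/s - 1)^2 * norm x ^ 2)"
      using c unfolding e1 e2 e3 .
    have "D x = s^2 * (u ((1/s) *\<^sub>R x) - u x - (1/s - 1) * (x \<bullet> g x))"
      unfolding D_def w_def using s by (simp add: field_simps power2_eq_square)
    then have "\<bar>D x\<bar> = s^2 * \<bar>u ((1/s) *\<^sub>R x) - u x - (1/s - 1) * (x \<bullet> g x)\<bar>" by (simp add: abs_mult)
    also have "\<dots> \<le> s^2 * ((1/2) * ((1/s - 1)^2 * norm x ^ 2))" using c2 by (intro mult_left_mono) auto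
    also have "\<dots> = (1/2) * (1 - s)^2 * norm x ^ 2" using s by (simp add: field_simps power2_eq_square)
    finally show ?thesis .
  qed
  have intD: "(\<integral>x. D x \<partial>M) = (\<integral>x. w x \<partial>M) - s^2 * (\<integral>x. u x \<partial>M) - s * (1 - s) * (\<integral>x. x \<bullet> g x \<partial>M)"
    and absD: "\<bar>\<integral>x. D x \<partial>M\<bar> \<le> (1/2) * (1 - s)^2 * (\<integral>x. norm x ^ 2 \<partial>M)"
    if MM: "M \<in> P2b b" for M
  proof -
    note i1 = pot_integrable[OF MM wl] and i2 = pot_integrable[OF MM u]
    show "(\<integral>x. D x \<partial>M) = (\<integral>x. w x \<partial>M) - s^2 * (\<integral>x. u x \<partial>M) - s * (1 - s) * (\<integral>x. x \<bullet> g x \<partial>M)"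
      unfolding D_def using i1 i2 by simp
    have iD: "integrable M D" unfolding D_def using i1 i2 by simp
    have "\<bar>\<integral>x. D x \<partial>M\<bar> \<le> (\<integral>x. \<bar>D x\<bar> \<partial>M)" by (rule integral_abs_bound)
    also have "\<dots> \<le> (\<integral>x. (1/2) * (1 - s)^2 * norm x ^ 2 \<partial>M)"
      using iD P2bD(3)[OF MM] Dbd by (intro integral_mono) auto
    also have "\<dots> = (1/2) * (1 - s)^2 * (\<integral>x. norm x ^ 2 \<partial>M)" by simp
    finally show "\<bar>\<integral>x. D x \<partial>M\<bar> \<le> (1/2) * (1 - s)^2 * (\<integral>x. norm x ^ 2 \<partial>M)" .
  qed
  have up: "(\<integral>x. w x \<partial>\<mu>) - (\<integral>x. w x \<partial>\<nu>) \<le> Z2 \<mu> \<nu>" by (rule Z2_upper[OF M N wl])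
  show ?thesis
    using intD[OF M] intD[OF N] absD[OF M] absD[OF N] up Zeq
    by (simp add: algebra_simps abs_le_iff)
qed

lemma Z2_dilation:
  fixes u :: "'a::euclidean_space \<Rightarrow> real"
  assumes M: "\<mu> \<in> P2b b" and N: "\<nu> \<in> P2b b" and opt: "optimal_potential \<mu> \<nu> u g"
  shows "2 * Z2 \<mu> \<nu> = (\<integral>x. x \<bullet> g x \<partial>\<mu>) - (\<integral>x. x \<bullet> g x \<partial>\<nu>)"
proof -
  define Z where "Z = Z2 \<mu> \<nu>"
  define J where "J = (\<integral>x. x \<bullet> g x \<partial>\<mu>) - (\<integral>x. x \<bullet> g x \<partial>\<nu>)"
  define m where "m = (\<integral>x. norm x ^ 2 \<partial>\<mu>) + (\<integral>x. norm x ^ 2 \<partial>\<nu>)"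
  define K where "K = (1/2) * m - Z + J"
  have ineq: "s^2 * Z + s * (1 - s) * J \<le> Z + (1/2) * (1 - s)^2 * m" if "s > 0" for s
    using dilation_ineq[OF M N opt that] unfolding Z_def J_def m_def .
  have "2 * Z - J \<le> 0"
  proof (rule small_le_zero[of _ K])
    fix t :: real assume t: "0 < t" "t < 1"
    have i: "(1 + t)^2 * Z + (1 + t) * (1 - (1 + t)) * J \<le> Z + (1/2) * (1 - (1 + t))^2 * m"
      using ineq[of "1 + t"] t by simp
    have "t * (2 * Z - J) - t * (t * K) = (1 + t)^2 * Z + (1 + t) * (1 - (1 + t)) * J - (Z + (1/2) * (1 - (1 + t))^2 * m)"
      unfolding K_def by (simp add: algebra_simps power2_eq_square)
    then have "t * (2 * Z - J) \<le> t * (t * K)" using i by linarith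
    then show "2 * Z - J \<le> t * K" using t by simp
  qed
  moreover have "J - 2 * Z \<le> 0"
  proof (rule small_le_zero[of _ K])
    fix t :: real assume t: "0 < t" "t < 1"
    have i: "(1 - t)^2 * Z + (1 - t) * (1 - (1 - t)) * J \<le> Z + (1/2) * (1 - (1 - t))^2 * m"
      using ineq[of "1 - t"] t by simp
    have "t * (J - 2 * Z) - t * (t * K) = (1 - t)^2 * Z + (1 - t) * (1 - (1 - t)) * J - (Z + (1/2) * (1 - (1 - t))^2 * m)"
      unfolding K_def by (simp add: algebra_simps power2_eq_square)
    then have "t * (J - 2 * Z) \<le> t * (t * K)" using i by linarith
    then show "J - 2 * Z \<le> t * K" using t by simp
  qed
  ultimately show ?thesis unfolding Z_def J_def by linarith
qed

lemma couplingsD: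
  assumes "\<gamma> \<in> couplings \<mu> \<nu>"
  shows "prob_space \<gamma>" "sets \<gamma> = sets borel" "distr \<gamma> borel fst = \<mu>" "distr \<gamma> borel snd = \<nu>"
  using assms unfolding couplings_def by auto

lemma meas_borel_iff:
  assumes "sets M = sets borel"
  shows "f \<in> borel_measurable M \<longleftrightarrow> f \<in> borel_measurable borel"
  by (subst measurable_cong_sets[OF assms refl]) (rule refl)

lemma fst_borel[measurable]: "fst \<in> borel_measurable (borel :: ('a::euclidean_space \<times> 'b::euclidean_space) measure)"
  by (intro borel_measurable_continuous_onI continuous_on_fst continuous_on_id)

lemma snd_borel[measurable]: "snd \<in> borel_measurable (borel :: ('a::euclidean_space \<times> 'b::euclidean_space) measure)"
  by (intro borel_measurable_continuous_onI continuous_on_snd continuous_on_id)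

lemma coupling_integral_fst:
  fixes f :: "'a::euclidean_space \<Rightarrow> 'c::{banach, second_countable_topology}"
  assumes "\<gamma> \<in> couplings \<mu> (\<nu>::'b::euclidean_space measure)" "f \<in> borel_measurable borel"
  shows "(\<integral>p. f (fst p) \<partial>\<gamma>) = (\<integral>x. f x \<partial>\<mu>)"
    "integrable \<gamma> (\<lambda>p. f (fst p)) \<longleftrightarrow> integrable \<mu> f"
proof -
  note c = couplingsD[OF assms(1)]
  have m: "fst \<in> measurable \<gamma> borel" by (subst meas_borel_iff[OF c(2)]) (rule fst_borel)
  show "(\<integral>p. f (fst p) \<partial>\<gamma>) = (\<integral>x. f x \<partial>\<mu>)"
    using integral_distr[OF m assms(2)] c(3) by simp
  show "integrable \<gamma> (\<lambda>p. f (fst p)) \<longleftrightarrow> integrable \<mu> f"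
    using integrable_distr_eq[OF m assms(2)] c(3) by simp
qed

lemma coupling_integral_snd:
  fixes f :: "'b::euclidean_space \<Rightarrow> 'c::{banach, second_countable_topology}"
  assumes "\<gamma> \<in> couplings (\<mu>::'a::euclidean_space measure) \<nu>" "f \<in> borel_measurable borel"
  shows "(\<integral>p. f (snd p) \<partial>\<gamma>) = (\<integral>x. f x \<partial>\<nu>)"
    "integrable \<gamma> (\<lambda>p. f (snd p)) \<longleftrightarrow> integrable \<nu> f"
proof -
  note c = couplingsD[OF assms(1)]
  have m: "snd \<in> measurable \<gamma> borel" by (subst meas_borel_iff[OF c(2)]) (rule snd_borel)
  show "(\<integral>p. f (snd p) \<partial>\<gamma>) = (\<integral>x. f x \<partial>\<nu>)"
    using integral_distr[OF m assms(2)] c(4) by simp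
  show "integrable \<gamma> (\<lambda>p. f (snd p)) \<longleftrightarrow> integrable \<nu> f"
    using integrable_distr_eq[OF m assms(2)] c(4) by simp
qed

lemma sq3: "(a + b + c)^2 \<le> 3 * (a^2 + b^2 + (c::real)^2)"
proof -
  have "0 \<le> (a - b)^2 + (b - c)^2 + (a - c)^2" by simp
  then show ?thesis by (simp add: power2_eq_square algebra_simps)
qed

lemma integrable_coupling_quad:
  fixes f :: "'a::euclidean_space \<times> 'a \<Rightarrow> 'c::{banach, second_countable_topology}"
  assumes g: "\<gamma> \<in> couplings \<mu> \<nu>" and M: "\<mu> \<in> P2b b" and N: "\<nu> \<in> P2b b"
    and f: "f \<in> borel_measurable borel"
    and bd: "\<And>p. norm (f p) \<le> C * (1 + norm (fst p) ^ 2 + norm (snd p) ^ 2)"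
  shows "integrable \<gamma> f"
proof -
  note c = couplingsD[OF g]
  interpret prob_space \<gamma> by (rule c(1))
  have i1: "integrable \<gamma> (\<lambda>p. norm (fst p) ^ 2)"
    using coupling_integral_fst(2)[OF g, of "\<lambda>x. norm x ^ 2"] P2bD(3)[OF M] by simp
  have i2: "integrable \<gamma> (\<lambda>p. norm (snd p) ^ 2)"
    using coupling_integral_snd(2)[OF g, of "\<lambda>x. norm x ^ 2"] P2bD(3)[OF N] by simp
  have "integrable \<gamma> (\<lambda>p. C * (1 + norm (fst p) ^ 2 + norm (snd p) ^ 2))"
    using i1 i2 by auto
  moreover have "f \<in> borel_measurable \<gamma>" by (subst meas_borel_iff[OF c(2)]) (rule f)
  ultimately show ?thesis
  proof (rule Bochner_Integration.integrable_bound)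
    show "AE x in \<gamma>. norm (f x) \<le> norm (C * (1 + norm (fst x) ^ 2 + norm (snd x) ^ 2))"
      by (intro AE_I2) (metis bd abs_ge_self order_trans real_norm_def)
  qed
qed

definition Lg :: "'a::real_normed_vector \<times> 'a \<Rightarrow> real" where
  "Lg p = 1 + norm (fst p) + norm (snd p)"

lemma Lg_sq: "Lg p ^ 2 \<le> 3 * (1 + norm (fst p) ^ 2 + norm (snd p) ^ 2)"
  unfolding Lg_def using sq3[of 1 "norm (fst p)" "norm (snd p)"] by simp

lemma Lg_ge: "1 \<le> Lg p" "norm (fst p) \<le> Lg p" "norm (snd p) \<le> Lg p"
  unfolding Lg_def by auto

lemma integrable_coupling_inner:
  fixes a c :: "'a::euclidean_space \<times> 'a \<Rightarrow> 'a"
  assumes g: "\<gamma> \<in> couplings \<mu> \<nu>" and M: "\<mu> \<in> P2b b" and N: "\<nu> \<in> P2b b"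
    and am: "a \<in> borel_measurable borel" and cm: "c \<in> borel_measurable borel"
    and A: "\<And>p. norm (a p) \<le> A * Lg p" and B: "\<And>p. norm (c p) \<le> B * Lg p"
  shows "integrable \<gamma> (\<lambda>p. a p \<bullet> c p)"
proof (rule integrable_coupling_quad[OF g M N, of _ "3 * A * B"])
  show "(\<lambda>p. a p \<bullet> c p) \<in> borel_measurable borel" using am cm by measurable
  fix p :: "'a \<times> 'a"
  have "0 \<le> A * Lg p" by (rule order_trans[OF norm_ge_zero A])
  then have A0: "0 \<le> A" using Lg_ge(1)[of p] by (auto simp: zero_le_mult_iff)
  have "0 \<le> B * Lg p" by (rule order_trans[OF norm_ge_zero B])
  then have B0: "0 \<le> B" using Lg_ge(1)[of p] by (auto simp: zero_le_mult_iff)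
  have "norm (a p \<bullet> c p) \<le> norm (a p) * norm (c p)" by (simp add: Cauchy_Schwarz_ineq2)
  also have "\<dots> \<le> (A * Lg p) * (B * Lg p)"
    by (rule mult_mono[OF A B]) (auto intro: order_trans[OF norm_ge_zero A])
  also have "\<dots> = A * B * Lg p ^ 2" by (simp add: power2_eq_square)
  also have "\<dots> \<le> A * B * (3 * (1 + norm (fst p) ^ 2 + norm (snd p) ^ 2))"
    using A0 B0 Lg_sq[of p] by (intro mult_left_mono) auto
  also have "\<dots> = 3 * A * B * (1 + norm (fst p) ^ 2 + norm (snd p) ^ 2)" by (simp only: mult_ac)
  finally show "norm (a p \<bullet> c p) \<le> 3 * A * B * (1 + norm (fst p) ^ 2 + norm (snd p) ^ 2)" .
qed

lemma Q_ext:
  fixes Z :: "'a::euclidean_space \<times> 'a \<Rightarrow> 'a"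
  assumes g: "\<gamma> \<in> couplings \<mu> \<nu>" and Q: "density_in_Q \<mu> \<nu> \<gamma> Z"
    and Phi: "\<Phi> \<in> borel_measurable borel"
  shows "integrable \<gamma> (\<lambda>p. \<Phi> (fst p) \<bullet> Z p) \<Longrightarrow> integrable \<mu> (\<lambda>x. \<Phi> x \<bullet> x) \<Longrightarrow>
          (\<integral>p. \<Phi> (fst p) \<bullet> Z p \<partial>\<gamma>) = (\<integral>x. \<Phi> x \<bullet> x \<partial>\<mu>)"
    and "integrable \<gamma> (\<lambda>p. \<Phi> (snd p) \<bullet> Z p) \<Longrightarrow> integrable \<nu> (\<lambda>x. \<Phi> x \<bullet> x) \<Longrightarrow>
          (\<integral>p. \<Phi> (snd p) \<bullet> Z p \<partial>\<gamma>) = (\<integral>x. \<Phi> x \<bullet> x \<partial>\<nu>)"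
proof -
  note c = couplingsD[OF g]
  have QQ: "integrable \<gamma> Z"
    "\<And>\<Phi>::'a \<Rightarrow> 'a. \<Phi> \<in> borel_measurable borel \<Longrightarrow> bounded (range \<Phi>) \<Longrightarrow>
        (\<integral>p. \<Phi> (fst p) \<bullet> Z p \<partial>\<gamma>) = (\<integral>x. \<Phi> x \<bullet> x \<partial>\<mu>)"
    "\<And>\<Psi>::'a \<Rightarrow> 'a. \<Psi> \<in> borel_measurable borel \<Longrightarrow> bounded (range \<Psi>) \<Longrightarrow>
        (\<integral>p. \<Psi> (snd p) \<bullet> Z p \<partial>\<gamma>) = (\<integral>y. \<Psi> y \<bullet> y \<partial>\<nu>)"
    using Q unfolding density_in_Q_def by auto
  have Zm: "Z \<in> borel_measurable \<gamma>" using QQ(1) by (rule borel_measurable_integrable)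
  then have Zb[measurable]: "Z \<in> borel_measurable borel" by (subst (asm) meas_borel_iff[OF c(2)])
  note Phi[measurable]
  define Pn where "Pn = (\<lambda>(n::nat) x. if norm (\<Phi> x) \<le> real n then \<Phi> x else 0)"
  have Pnm[measurable]: "Pn n \<in> borel_measurable borel" for n unfolding Pn_def by measurable
  have Pnb: "bounded (range (Pn n))" for n
    unfolding bounded_iff Pn_def by (intro exI[of _ "real n"]) auto
  have Pn_le: "norm (Pn n x \<bullet> v) \<le> norm (\<Phi> x \<bullet> v)" for n x v unfolding Pn_def by auto
  have Pn_lim: "(\<lambda>n. Pn n x \<bullet> v) \<longlonglongrightarrow> \<Phi> x \<bullet> v" for x v
  proof (rule tendsto_eventually)
    obtain N :: nat where N: "norm (\<Phi> x) \<le> real N" using real_arch_simple by blast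
    have "Pn n x \<bullet> v = \<Phi> x \<bullet> v" if "N \<le> n" for n
    proof -
      have "real N \<le> real n" using that by simp
      then have "norm (\<Phi> x) \<le> real n" using N by linarith
      then show ?thesis unfolding Pn_def by simp
    qed
    then show "\<forall>\<^sub>F n in sequentially. Pn n x \<bullet> v = \<Phi> x \<bullet> v"
      unfolding eventually_sequentially by blast
  qed
  {
    assume i1: "integrable \<gamma> (\<lambda>p. \<Phi> (fst p) \<bullet> Z p)" and i2: "integrable \<mu> (\<lambda>x. \<Phi> x \<bullet> x)"
    have eqn: "(\<integral>p. Pn n (fst p) \<bullet> Z p \<partial>\<gamma>) = (\<integral>x. Pn n x \<bullet> x \<partial>\<mu>)" for n
      by (rule QQ(2)[OF Pnm Pnb])
    have l1: "(\<lambda>n. \<integral>p. Pn n (fst p) \<bullet> Z p \<partial>\<gamma>) \<longlonglongrightarrow> (\<integral>p. \<Phi> (fst p) \<bullet> Z p \<partial>\<gamma>)"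
    proof (rule integral_dominated_convergence[where w = "\<lambda>p. norm (\<Phi> (fst p) \<bullet> Z p)"])
      show "(\<lambda>p. \<Phi> (fst p) \<bullet> Z p) \<in> borel_measurable \<gamma>" by (subst meas_borel_iff[OF c(2)]) measurable
      show "(\<lambda>p. Pn n (fst p) \<bullet> Z p) \<in> borel_measurable \<gamma>" for n by (subst meas_borel_iff[OF c(2)]) measurable
      show "integrable \<gamma> (\<lambda>p. norm (\<Phi> (fst p) \<bullet> Z p))" using i1 by simp
      show "AE p in \<gamma>. (\<lambda>n. Pn n (fst p) \<bullet> Z p) \<longlonglongrightarrow> \<Phi> (fst p) \<bullet> Z p" using Pn_lim by simp
      show "AE p in \<gamma>. norm (Pn n (fst p) \<bullet> Z p) \<le> norm (\<Phi> (fst p) \<bullet> Z p)" for n using Pn_le by simp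
    qed
    have l2: "(\<lambda>n. \<integral>x. Pn n x \<bullet> x \<partial>\<mu>) \<longlonglongrightarrow> (\<integral>x. \<Phi> x \<bullet> x \<partial>\<mu>)"
    proof (rule integral_dominated_convergence[where w = "\<lambda>x. norm (\<Phi> x \<bullet> x)"])
      have s: "sets \<mu> = sets borel" using c(3) by (metis sets_distr)
      show "(\<lambda>x. \<Phi> x \<bullet> x) \<in> borel_measurable \<mu>" by (subst meas_borel_iff[OF s]) measurable
      show "(\<lambda>x. Pn n x \<bullet> x) \<in> borel_measurable \<mu>" for n by (subst meas_borel_iff[OF s]) measurable
      show "integrable \<mu> (\<lambda>x. norm (\<Phi> x \<bullet> x))" using i2 by simp
      show "AE x in \<mu>. (\<lambda>n. Pn n x \<bullet> x) \<longlonglongrightarrow> \<Phi> x \<bullet> x" using Pn_lim by simp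
      show "AE x in \<mu>. norm (Pn n x \<bullet> x) \<le> norm (\<Phi> x \<bullet> x)" for n using Pn_le by simp
    qed
    show "(\<integral>p. \<Phi> (fst p) \<bullet> Z p \<partial>\<gamma>) = (\<integral>x. \<Phi> x \<bullet> x \<partial>\<mu>)"
      using LIMSEQ_unique[OF l1[unfolded eqn] l2] .
  }
  {
    assume i1: "integrable \<gamma> (\<lambda>p. \<Phi> (snd p) \<bullet> Z p)" and i2: "integrable \<nu> (\<lambda>x. \<Phi> x \<bullet> x)"
    have eqn: "(\<integral>p. Pn n (snd p) \<bullet> Z p \<partial>\<gamma>) = (\<integral>x. Pn n x \<bullet> x \<partial>\<nu>)" for n
      by (rule QQ(3)[OF Pnm Pnb])
    have l1: "(\<lambda>n. \<integral>p. Pn n (snd p) \<bullet> Z p \<partial>\<gamma>) \<longlonglongrightarrow> (\<integral>p. \<Phi> (snd p) \<bullet> Z p \<partial>\<gamma>)"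
    proof (rule integral_dominated_convergence[where w = "\<lambda>p. norm (\<Phi> (snd p) \<bullet> Z p)"])
      show "(\<lambda>p. \<Phi> (snd p) \<bullet> Z p) \<in> borel_measurable \<gamma>" by (subst meas_borel_iff[OF c(2)]) measurable
      show "(\<lambda>p. Pn n (snd p) \<bullet> Z p) \<in> borel_measurable \<gamma>" for n by (subst meas_borel_iff[OF c(2)]) measurable
      show "integrable \<gamma> (\<lambda>p. norm (\<Phi> (snd p) \<bullet> Z p))" using i1 by simp
      show "AE p in \<gamma>. (\<lambda>n. Pn n (snd p) \<bullet> Z p) \<longlonglongrightarrow> \<Phi> (snd p) \<bullet> Z p" using Pn_lim by simp
      show "AE p in \<gamma>. norm (Pn n (snd p) \<bullet> Z p) \<le> norm (\<Phi> (snd p) \<bullet> Z p)" for n using Pn_le by simp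
    qed
    have l2: "(\<lambda>n. \<integral>x. Pn n x \<bullet> x \<partial>\<nu>) \<longlonglongrightarrow> (\<integral>x. \<Phi> x \<bullet> x \<partial>\<nu>)"
    proof (rule integral_dominated_convergence[where w = "\<lambda>x. norm (\<Phi> x \<bullet> x)"])
      have s: "sets \<nu> = sets borel" using c(4) by (metis sets_distr)
      show "(\<lambda>x. \<Phi> x \<bullet> x) \<in> borel_measurable \<nu>" by (subst meas_borel_iff[OF s]) measurable
      show "(\<lambda>x. Pn n x \<bullet> x) \<in> borel_measurable \<nu>" for n by (subst meas_borel_iff[OF s]) measurable
      show "integrable \<nu> (\<lambda>x. norm (\<Phi> x \<bullet> x))" using i2 by simp
      show "AE x in \<nu>. (\<lambda>n. Pn n x \<bullet> x) \<longlonglongrightarrow> \<Phi> x \<bullet> x" using Pn_lim by simp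
      show "AE x in \<nu>. norm (Pn n x \<bullet> x) \<le> norm (\<Phi> x \<bullet> x)" for n using Pn_le by simp
    qed
    show "(\<integral>p. \<Phi> (snd p) \<bullet> Z p \<partial>\<gamma>) = (\<integral>x. \<Phi> x \<bullet> x \<partial>\<nu>)"
      using LIMSEQ_unique[OF l1[unfolded eqn] l2] .
  }
qed

lemma zeta_identity:
  fixes x y gx gy :: "'a::euclidean_space"
  defines "z \<equiv> (1/2) *\<^sub>R (x + y) + (1/2) *\<^sub>R (gx - gy)"
  shows "(1/2) * norm (y - z) ^ 2 + (1/2) * norm (x - z) ^ 2 =
    (1/2) * (x \<bullet> gx - y \<bullet> gy) + (1/2) * (- (x \<bullet> z - x \<bullet> x) + (gx \<bullet> z - gx \<bullet> x) - (y \<bullet> z - y \<bullet> y) - (gy \<bullet> z - gy \<bullet> y))"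
  unfolding z_def power2_norm_eq_inner
  by (simp add: inner_add_left inner_add_right inner_diff_left inner_diff_right inner_commute algebra_simps)

lemma zeta_meas[measurable]:
  assumes "g \<in> borel_measurable borel"
  shows "zeta g \<in> borel_measurable (borel :: ('a::euclidean_space \<times> 'a) measure)"
  unfolding zeta_def[abs_def] using assms by measurable

lemma zeta_bound:
  fixes u :: "'a::euclidean_space \<Rightarrow> real"
  assumes u: "grad_lip1 u g"
  shows "norm (zeta g p) \<le> (norm (g 0) + 1) * Lg p"
proof -
  note gp = grad_lip1_props[OF u]
  have "norm (zeta g p) \<le> norm ((1/2) *\<^sub>R (fst p + snd p)) + norm ((1/2) *\<^sub>R (g (fst p) - g (snd p)))"
    unfolding zeta_def by (rule norm_triangle_ineq)
  also have "\<dots> = (1/2) * norm (fst p + snd p) + (1/2) * norm (g (fst p) - g (snd p))" by simp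
  also have "\<dots> \<le> (1/2) * (norm (fst p) + norm (snd p)) + (1/2) * (norm (g (fst p)) + norm (g (snd p)))"
    by (intro add_mono mult_left_mono norm_triangle_ineq norm_triangle_ineq4) auto
  also have "\<dots> \<le> (1/2) * (norm (fst p) + norm (snd p)) + (1/2) * ((norm (g 0) + norm (fst p)) + (norm (g 0) + norm (snd p)))"
    using gp(5)[of "fst p"] gp(5)[of "snd p"] by simp
  also have "\<dots> = norm (g 0) + norm (fst p) + norm (snd p)" by (simp add: field_simps)
  also have "\<dots> \<le> (norm (g 0) + 1) * Lg p"
  proof -
    have "norm (g 0) \<le> norm (g 0) * Lg p" using Lg_ge(1)[of p] by (simp add: mult_le_cancel_left1)
    then show ?thesis unfolding Lg_def by (simp add: algebra_simps)
  qed
  finally show ?thesis .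
qed

lemma g_bound:
  fixes u :: "'a::euclidean_space \<Rightarrow> real"
  assumes u: "grad_lip1 u g"
  shows "norm (g (fst p)) \<le> (norm (g 0) + 1) * Lg p" "norm (g (snd p)) \<le> (norm (g 0) + 1) * Lg p"
proof -
  note gp = grad_lip1_props[OF u]
  have a: "norm (g 0) \<le> norm (g 0) * Lg p" using Lg_ge(1)[of p] by (simp add: mult_le_cancel_left1)
  show "norm (g (fst p)) \<le> (norm (g 0) + 1) * Lg p"
    using gp(5)[of "fst p"] a Lg_ge(2)[of p] by (simp add: algebra_simps)
  show "norm (g (snd p)) \<le> (norm (g 0) + 1) * Lg p"
    using gp(5)[of "snd p"] a Lg_ge(3)[of p] by (simp add: algebra_simps)
qed

lemma cost_identity:
  fixes u :: "'a::euclidean_space \<Rightarrow> real"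
  assumes M: "\<mu> \<in> P2b b" and N: "\<nu> \<in> P2b b" and opt: "optimal_potential \<mu> \<nu> u g"
    and G: "\<gamma> \<in> Gamma_bar \<mu> \<nu> g"
  shows "(\<integral>p. (1/2) * norm (snd p - zeta g p) ^ 2 + (1/2) * norm (fst p - zeta g p) ^ 2 \<partial>\<gamma>) = Z2 \<mu> \<nu>"
proof -
  have gc: "\<gamma> \<in> couplings \<mu> \<nu>" and Q: "density_in_Q \<mu> \<nu> \<gamma> (zeta g)"
    using G unfolding Gamma_bar_def Gamma_def by auto
  have u: "grad_lip1 u g" using opt unfolding optimal_potential_def by simp
  note gp = grad_lip1_props[OF u]
  note gm[measurable] = gp(4)
  have b1: "norm (fst p) \<le> 1 * Lg p" and b2: "norm (snd p) \<le> 1 * Lg p" for p :: "'a \<times> 'a"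
    using Lg_ge(2)[of p] Lg_ge(3)[of p] by auto
  note b3 = g_bound(1)[OF u] and b4 = g_bound(2)[OF u] and b5 = zeta_bound[OF u]
  note ic = integrable_coupling_inner[OF gc M N]
  have I1: "integrable \<gamma> (\<lambda>p. fst p \<bullet> zeta g p)" by (rule ic[OF _ _ b1 b5]) measurable
  have I2: "integrable \<gamma> (\<lambda>p. g (fst p) \<bullet> zeta g p)" by (rule ic[OF _ _ b3 b5]) measurable
  have I3: "integrable \<gamma> (\<lambda>p. snd p \<bullet> zeta g p)" by (rule ic[OF _ _ b2 b5]) measurable
  have I4: "integrable \<gamma> (\<lambda>p. g (snd p) \<bullet> zeta g p)" by (rule ic[OF _ _ b4 b5]) measurable
  have I5: "integrable \<gamma> (\<lambda>p. fst p \<bullet> fst p)" by (rule ic[OF _ _ b1 b1]) measurable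
  have I6: "integrable \<gamma> (\<lambda>p. g (fst p) \<bullet> fst p)" by (rule ic[OF _ _ b3 b1]) measurable
  have I7: "integrable \<gamma> (\<lambda>p. snd p \<bullet> snd p)" by (rule ic[OF _ _ b2 b2]) measurable
  have I8: "integrable \<gamma> (\<lambda>p. g (snd p) \<bullet> snd p)" by (rule ic[OF _ _ b4 b2]) measurable
  have I9: "integrable \<gamma> (\<lambda>p. fst p \<bullet> g (fst p))" by (rule ic[OF _ _ b1 b3]) measurable
  have I10: "integrable \<gamma> (\<lambda>p. snd p \<bullet> g (snd p))" by (rule ic[OF _ _ b2 b4]) measurable
  have Jm1: "integrable \<mu> (\<lambda>x. x \<bullet> x)" using coupling_integral_fst(2)[OF gc, of "\<lambda>x. x \<bullet> x"] I5 by simp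
  have Jm2: "integrable \<mu> (\<lambda>x. g x \<bullet> x)" using coupling_integral_fst(2)[OF gc, of "\<lambda>x. g x \<bullet> x"] I6 by simp
  have Jn1: "integrable \<nu> (\<lambda>x. x \<bullet> x)" using coupling_integral_snd(2)[OF gc, of "\<lambda>x. x \<bullet> x"] I7 by simp
  have Jn2: "integrable \<nu> (\<lambda>x. g x \<bullet> x)" using coupling_integral_snd(2)[OF gc, of "\<lambda>x. g x \<bullet> x"] I8 by simp
  have idm: "(\<lambda>x. x) \<in> borel_measurable (borel :: 'a measure)" by simp
  have Q1: "(\<integral>p. fst p \<bullet> zeta g p \<partial>\<gamma>) = (\<integral>p. fst p \<bullet> fst p \<partial>\<gamma>)"
    using Q_ext(1)[OF gc Q idm] I1 Jm1 coupling_integral_fst(1)[OF gc, of "\<lambda>x. x \<bullet> x"] by simp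
  have Q2: "(\<integral>p. g (fst p) \<bullet> zeta g p \<partial>\<gamma>) = (\<integral>p. g (fst p) \<bullet> fst p \<partial>\<gamma>)"
    using Q_ext(1)[OF gc Q gm] I2 Jm2 coupling_integral_fst(1)[OF gc, of "\<lambda>x. g x \<bullet> x"] by simp
  have Q3: "(\<integral>p. snd p \<bullet> zeta g p \<partial>\<gamma>) = (\<integral>p. snd p \<bullet> snd p \<partial>\<gamma>)"
    using Q_ext(2)[OF gc Q idm] I3 Jn1 coupling_integral_snd(1)[OF gc, of "\<lambda>x. x \<bullet> x"] by simp
  have Q4: "(\<integral>p. g (snd p) \<bullet> zeta g p \<partial>\<gamma>) = (\<integral>p. g (snd p) \<bullet> snd p \<partial>\<gamma>)"
    using Q_ext(2)[OF gc Q gm] I4 Jn2 coupling_integral_snd(1)[OF gc, of "\<lambda>x. g x \<bullet> x"] by simp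
  have pw: "(1/2) * norm (snd p - zeta g p) ^ 2 + (1/2) * norm (fst p - zeta g p) ^ 2 =
    (1/2) * (fst p \<bullet> g (fst p) - snd p \<bullet> g (snd p)) +
    (1/2) * (- (fst p \<bullet> zeta g p - fst p \<bullet> fst p) + (g (fst p) \<bullet> zeta g p - g (fst p) \<bullet> fst p)
      - (snd p \<bullet> zeta g p - snd p \<bullet> snd p) - (g (snd p) \<bullet> zeta g p - g (snd p) \<bullet> snd p))" for p
    unfolding zeta_def by (rule zeta_identity)
  have "(\<integral>p. (1/2) * norm (snd p - zeta g p) ^ 2 + (1/2) * norm (fst p - zeta g p) ^ 2 \<partial>\<gamma>) =
    (1/2) * ((\<integral>p. fst p \<bullet> g (fst p) \<partial>\<gamma>) - (\<integral>p. snd p \<bullet> g (snd p) \<partial>\<gamma>)) +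
    (1/2) * (- ((\<integral>p. fst p \<bullet> zeta g p \<partial>\<gamma>) - (\<integral>p. fst p \<bullet> fst p \<partial>\<gamma>))
      + ((\<integral>p. g (fst p) \<bullet> zeta g p \<partial>\<gamma>) - (\<integral>p. g (fst p) \<bullet> fst p \<partial>\<gamma>))
      - ((\<integral>p. snd p \<bullet> zeta g p \<partial>\<gamma>) - (\<integral>p. snd p \<bullet> snd p \<partial>\<gamma>))
      - ((\<integral>p. g (snd p) \<bullet> zeta g p \<partial>\<gamma>) - (\<integral>p. g (snd p) \<bullet> snd p \<partial>\<gamma>)))"
    unfolding pw using I1 I2 I3 I4 I5 I6 I7 I8 I9 I10 by simp
  also have "\<dots> = (1/2) * ((\<integral>x. x \<bullet> g x \<partial>\<mu>) - (\<integral>x. x \<bullet> g x \<partial>\<nu>))"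
    unfolding Q1 Q2 Q3 Q4
    using coupling_integral_fst(1)[OF gc, of "\<lambda>x. x \<bullet> g x"] coupling_integral_snd(1)[OF gc, of "\<lambda>x. x \<bullet> g x"]
    by simp
  also have "\<dots> = Z2 \<mu> \<nu>" using Z2_dilation[OF M N opt] by simp
  finally show ?thesis .
qed

lemma Pair_borel: "Pair x \<in> measurable (borel :: 'b::euclidean_space measure) (borel :: ('a::euclidean_space \<times> 'b) measure)"
  by (intro borel_measurable_continuous_onI continuous_intros)

lemma disint_fst_props:
  fixes M :: "'a::euclidean_space measure" and K :: "'a \<Rightarrow> 'b::euclidean_space measure"
  assumes D: "disint_fst M K \<gamma>" and sM: "sets M = sets borel" and sg: "sets \<gamma> = sets borel"
    and M0: "space M \<noteq> {}"
  shows "\<And>x. x \<in> space M \<Longrightarrow> prob_space (K x)"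
    and "\<And>x. x \<in> space M \<Longrightarrow> sets (K x) = sets borel"
    and "K \<in> measurable M (subprob_algebra borel)"
    and "(\<lambda>x. distr (K x) borel (Pair x)) \<in> measurable M (subprob_algebra borel)"
    and "\<gamma> = M \<bind> (\<lambda>x. distr (K x) borel (Pair x))"
    and "\<And>f. f \<in> borel_measurable borel \<Longrightarrow> (\<integral>\<^sup>+p. f p \<partial>\<gamma>) = (\<integral>\<^sup>+x. \<integral>\<^sup>+y. f (x, y) \<partial>K x \<partial>M)"
proof -
  have Kp: "K \<in> measurable M (prob_algebra borel)"
    and E: "\<And>A. A \<in> sets borel \<Longrightarrow> emeasure \<gamma> A = (\<integral>\<^sup>+x. emeasure (K x) (Pair x -` A) \<partial>M)"
    using D unfolding disint_fst_def by auto
  have Kx: "K x \<in> space (prob_algebra borel)" if "x \<in> space M" for x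
    using measurable_space[OF Kp that] .
  show Kpr: "prob_space (K x)" and Ks: "sets (K x) = sets borel" if "x \<in> space M" for x
    using Kx[OF that] unfolding space_prob_algebra by auto
  show Km: "K \<in> measurable M (subprob_algebra borel)" by (rule measurable_prob_algebraD[OF Kp])
  have pm: "(\<lambda>(x::'a, y::'b). (x, y)) \<in> measurable (M \<Otimes>\<^sub>M borel) borel"
  proof -
    have "sets (M \<Otimes>\<^sub>M (borel :: 'b measure)) = sets (borel \<Otimes>\<^sub>M (borel :: 'b measure))"
      by (rule sets_pair_measure_cong[OF sM refl])
    also have "\<dots> = sets (borel :: ('a \<times> 'b) measure)" by (rule arg_cong[where f=sets, OF borel_prod])
    finally have s: "sets (M \<Otimes>\<^sub>M (borel :: 'b measure)) = sets (borel :: ('a \<times> 'b) measure)" .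
    have "id \<in> measurable (M \<Otimes>\<^sub>M borel) (borel :: ('a \<times> 'b) measure)"
      by (subst measurable_cong_sets[OF s refl]) (simp add: measurable_ident)
    moreover have "(\<lambda>(x::'a, y::'b). (x, y)) = id" by auto
    ultimately show ?thesis by simp
  qed
  show Nm: "(\<lambda>x. distr (K x) borel (Pair x)) \<in> measurable M (subprob_algebra borel)"
    using measurable_distr2[OF pm Km] by simp
  have Pm: "Pair x \<in> measurable (K x) borel" if "x \<in> space M" for x
    using measurable_cong_sets[OF Ks[OF that] refl] Pair_borel by blast
  have sK: "space (K x) = UNIV" if "x \<in> space M" for x
    using sets_eq_imp_space_eq[OF Ks[OF that]] by simp
  show eq: "\<gamma> = M \<bind> (\<lambda>x. distr (K x) borel (Pair x))"
  proof (rule measure_eqI)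
    show "sets \<gamma> = sets (M \<bind> (\<lambda>x. distr (K x) borel (Pair x)))"
      using sg by (subst sets_bind[OF _ M0]) auto
    fix A assume "A \<in> sets \<gamma>"
    then have A: "A \<in> sets borel" using sg by simp
    have "emeasure (M \<bind> (\<lambda>x. distr (K x) borel (Pair x))) A = (\<integral>\<^sup>+x. emeasure (distr (K x) borel (Pair x)) A \<partial>M)"
      by (rule emeasure_bind[OF M0 Nm A])
    also have "\<dots> = (\<integral>\<^sup>+x. emeasure (K x) (Pair x -` A) \<partial>M)"
      by (intro nn_integral_cong) (simp add: emeasure_distr[OF Pm A] sK)
    finally show "emeasure \<gamma> A = emeasure (M \<bind> (\<lambda>x. distr (K x) borel (Pair x))) A"
      using E[OF A] by simp
  qed
  fix f :: "'a \<times> 'b \<Rightarrow> ennreal" assume f: "f \<in> borel_measurable borel"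
  have "(\<integral>\<^sup>+p. f p \<partial>\<gamma>) = (\<integral>\<^sup>+x. \<integral>\<^sup>+p. f p \<partial>distr (K x) borel (Pair x) \<partial>M)"
    by (subst eq) (rule nn_integral_bind[OF f Nm])
  also have "\<dots> = (\<integral>\<^sup>+x. \<integral>\<^sup>+y. f (x, y) \<partial>K x \<partial>M)"
  proof (intro nn_integral_cong)
    fix x assume x: "x \<in> space M"
    have fd: "f \<in> borel_measurable (distr (K x) borel (Pair x))"
      using f by (subst measurable_cong_sets[OF sets_distr refl])
    show "(\<integral>\<^sup>+p. f p \<partial>distr (K x) borel (Pair x)) = (\<integral>\<^sup>+y. f (x, y) \<partial>K x)"
      by (rule nn_integral_distr[OF Pm[OF x] fd])
  qed
  finally show "(\<integral>\<^sup>+p. f p \<partial>\<gamma>) = (\<integral>\<^sup>+x. \<integral>\<^sup>+y. f (x, y) \<partial>K x \<partial>M)" .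
qed

lemma countable_Int_stable_gen:
  obtains G :: "'b::second_countable_topology set set"
  where "countable G" "Int_stable G" "UNIV \<in> G" "sets borel = sigma_sets UNIV G" "G \<subseteq> sets borel"
proof -
  obtain B :: "'b set set" where B: "countable B" "topological_basis B" using ex_countable_basis by blast
  define G where "G = (\<lambda>F. \<Inter>F) ` {F. finite F \<and> F \<subseteq> B}"
  have cG: "countable G" unfolding G_def using countable_Collect_finite_subset[OF B(1)] by simp
  have iG: "Int_stable G"
  proof (rule Int_stableI)
    fix a b assume "a \<in> G" "b \<in> G"
    then obtain F1 F2 where "finite F1" "F1 \<subseteq> B" "a = \<Inter>F1" "finite F2" "F2 \<subseteq> B" "b = \<Inter>F2"
      unfolding G_def by auto
    then have "a \<inter> b = \<Inter>(F1 \<union> F2)" "finite (F1 \<union> F2)" "F1 \<union> F2 \<subseteq> B" by auto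
    then show "a \<inter> b \<in> G" unfolding G_def by blast
  qed
  have uG: "UNIV \<in> G" unfolding G_def by (rule image_eqI[of _ _ "{}"]) auto
  have oG: "open a" if "a \<in> G" for a
    using that B(2) unfolding G_def by (auto intro!: open_Inter simp: topological_basis_open)
  have BG: "B \<subseteq> G" unfolding G_def by (auto intro!: image_eqI[of _ _ "{b}" for b])
  have sG: "sets borel = sigma_sets UNIV G"
    unfolding sets_borel
  proof (rule sigma_sets_eqI)
    fix a :: "'b set" assume "a \<in> {S. open S}"
    then obtain B' where "B' \<subseteq> B" "\<Union>B' = a" using B(2) unfolding topological_basis_def by blast
    moreover have "countable B'" using \<open>B' \<subseteq> B\<close> B(1) countable_subset by blast
    ultimately show "a \<in> sigma_sets UNIV G"
      using BG by (blast intro: sigma_sets_UNION)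
  next
    fix b assume "b \<in> G" then show "b \<in> sigma_sets UNIV {S. open S}" using oG by auto
  qed
  have "G \<subseteq> sets borel" using oG by auto
  with cG iG uG sG show ?thesis using that by blast
qed

lemma kernel_unique:
  fixes M :: "'a::euclidean_space measure" and K :: "'a \<Rightarrow> 'b::euclidean_space measure"
    and K1 :: "'a \<Rightarrow> 'c::euclidean_space measure" and Z :: "'a \<times> 'b \<Rightarrow> 'c"
  assumes D: "disint_fst M K \<gamma>" and D1: "disint_fst M K1 (distr \<gamma> borel (\<lambda>p. (fst p, Z p)))"
    and Zm: "Z \<in> borel_measurable borel"
    and sM: "sets M = sets borel" and sg: "sets \<gamma> = sets borel" and PM: "prob_space M"
  shows "AE x in M. K1 x = distr (K x) borel (\<lambda>y. Z (x, y))"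
proof -
  interpret prob_space M by (rule PM)
  have M0: "space M \<noteq> {}" by (rule not_empty)
  note P = disint_fst_props[OF D sM sg M0]
  have sg1: "sets (distr \<gamma> borel (\<lambda>p. (fst p, Z p))) = sets borel" by simp
  note P1 = disint_fst_props[OF D1 sM sg1 M0]
  define K' where "K' = (\<lambda>x. distr (K x) borel (\<lambda>y. Z (x, y)))"
  have pm: "(\<lambda>(x, y). Z (x, y)) \<in> measurable (M \<Otimes>\<^sub>M borel) borel"
  proof -
    have "sets (M \<Otimes>\<^sub>M (borel :: 'b measure)) = sets (borel \<Otimes>\<^sub>M (borel :: 'b measure))"
      by (rule sets_pair_measure_cong[OF sM refl])
    also have "\<dots> = sets (borel :: ('a \<times> 'b) measure)" by (rule arg_cong[where f=sets, OF borel_prod])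
    finally have s: "sets (M \<Otimes>\<^sub>M (borel :: 'b measure)) = sets (borel :: ('a \<times> 'b) measure)" .
    have "Z \<in> measurable (M \<Otimes>\<^sub>M borel) (borel :: 'c measure)"
      by (subst measurable_cong_sets[OF s refl]) (rule Zm)
    moreover have "(\<lambda>(x, y). Z (x, y)) = Z" by auto
    ultimately show ?thesis by simp
  qed
  have K'm: "K' \<in> measurable M (subprob_algebra borel)"
    unfolding K'_def using measurable_distr2[OF pm P(3)] by simp
  have Zx: "(\<lambda>y. Z (x, y)) \<in> measurable (K x) borel" if "x \<in> space M" for x
  proof -
    have "(\<lambda>y. Z (x, y)) \<in> measurable (borel :: 'b measure) borel" using Zm by measurable
    then show ?thesis using measurable_cong_sets[OF P(2)[OF that] refl] by blast
  qed
  have sK: "space (K x) = UNIV" if "x \<in> space M" for x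
    using sets_eq_imp_space_eq[OF P(2)[OF that]] by simp
  have one: "AE x in M. emeasure (K1 x) A = emeasure (K' x) A" if A: "A \<in> sets borel" for A
  proof (rule density_unique_finite_measure)
    show "(\<lambda>x. emeasure (K1 x) A) \<in> borel_measurable M"
      using measurable_compose[OF P1(3) measurable_emeasure_subprob_algebra[OF A]] .
    show "(\<lambda>x. emeasure (K' x) A) \<in> borel_measurable M"
      using measurable_compose[OF K'm measurable_emeasure_subprob_algebra[OF A]] .
    show "AE x in M. 0 \<le> emeasure (K1 x) A" "AE x in M. 0 \<le> emeasure (K' x) A" by auto
    fix B assume B: "B \<in> sets M"
    then have Bb: "B \<in> sets borel" using sM by simp
    have BA: "B \<times> A \<in> sets (borel :: ('a \<times> 'c) measure)"
      using Bb A by (simp flip: borel_prod)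
    have "(\<integral>\<^sup>+x. emeasure (K1 x) A * indicator B x \<partial>M) = (\<integral>\<^sup>+x. emeasure (K1 x) (Pair x -` (B \<times> A)) \<partial>M)"
      by (intro nn_integral_cong) (auto simp: indicator_def)
    also have "\<dots> = emeasure (distr \<gamma> borel (\<lambda>p. (fst p, Z p))) (B \<times> A)"
      using D1 BA unfolding disint_fst_def by simp
    also have "\<dots> = emeasure \<gamma> ((\<lambda>p. (fst p, Z p)) -` (B \<times> A) \<inter> space \<gamma>)"
    proof (rule emeasure_distr[OF _ BA])
      show "(\<lambda>p. (fst p, Z p)) \<in> measurable \<gamma> borel"
        by (subst measurable_cong_sets[OF sg refl]) (use Zm in measurable)
    qed
    also have "(\<lambda>p. (fst p, Z p)) -` (B \<times> A) \<inter> space \<gamma> = {p. fst p \<in> B \<and> Z p \<in> A}"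
      using sets_eq_imp_space_eq[OF sg] by auto
    also have "emeasure \<gamma> {p. fst p \<in> B \<and> Z p \<in> A} = (\<integral>\<^sup>+x. emeasure (K x) (Pair x -` {p. fst p \<in> B \<and> Z p \<in> A}) \<partial>M)"
    proof -
      have "{p. fst p \<in> B \<and> Z p \<in> A} \<in> sets (borel :: ('a \<times> 'b) measure)"
        using Bb A Zm by measurable
      then show ?thesis using D unfolding disint_fst_def by simp
    qed
    also have "\<dots> = (\<integral>\<^sup>+x. emeasure (K' x) A * indicator B x \<partial>M)"
    proof (intro nn_integral_cong)
      fix x assume x: "x \<in> space M"
      have "emeasure (K' x) A = emeasure (K x) ((\<lambda>y. Z (x, y)) -` A \<inter> space (K x))"
        unfolding K'_def by (rule emeasure_distr[OF Zx[OF x] A])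
      then show "emeasure (K x) (Pair x -` {p. fst p \<in> B \<and> Z p \<in> A}) = emeasure (K' x) A * indicator B x"
        using sK[OF x] by (auto simp: indicator_def vimage_def)
    qed
    finally show "(\<integral>\<^sup>+x. emeasure (K1 x) A * indicator B x \<partial>M) = (\<integral>\<^sup>+x. emeasure (K' x) A * indicator B x \<partial>M)" .
  qed
  obtain G :: "'c set set" where G: "countable G" "Int_stable G" "UNIV \<in> G" "sets borel = sigma_sets UNIV G" "G \<subseteq> sets borel"
    by (rule countable_Int_stable_gen)
  have "AE x in M. \<forall>A\<in>G. emeasure (K1 x) A = emeasure (K' x) A"
    using G(1,5) one by (subst AE_ball_countable) auto
  then show ?thesis
  proof (rule AE_mp)
    show "AE x in M. (\<forall>A\<in>G. emeasure (K1 x) A = emeasure (K' x) A) \<longrightarrow> K1 x = distr (K x) borel (\<lambda>y. Z (x, y))"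
    proof (rule AE_I2, rule impI)
    fix x assume x: "x \<in> space M" and E: "\<forall>A\<in>G. emeasure (K1 x) A = emeasure (K' x) A"
    have s1: "sets (K1 x) = sigma_sets UNIV G" using P1(2)[OF x] G(4) by simp
    have s2: "sets (K' x) = sigma_sets UNIV G" unfolding K'_def using G(4) by simp
    interpret p1: prob_space "K1 x" by (rule P1(1)[OF x])
    have "K1 x = K' x"
    proof (rule measure_eqI_generator_eq[OF G(2) _ _ s1 s2, where A = "\<lambda>_. UNIV"])
      show "G \<subseteq> Pow UNIV" by simp
      show "\<And>X. X \<in> G \<Longrightarrow> emeasure (K1 x) X = emeasure (K' x) X" using E by simp
      show "range (\<lambda>_. UNIV) \<subseteq> G" using G(3) by auto
    qed simp_all
    then show "K1 x = distr (K x) borel (\<lambda>y. Z (x, y))" unfolding K'_def .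
    qed
  qed
qed

lemma conjugate_exists:
  fixes \<phi> :: "'a::euclidean_space \<Rightarrow> real" and T :: "'a \<Rightarrow> 'a"
  assumes \<phi>c: "continuous_on UNIV \<phi>"
    and cvx: "\<And>y y'. \<phi> y + T y \<bullet> (y' - y) \<le> \<phi> y'"
  obtains \<psi> :: "'a \<Rightarrow> ereal"
  where "\<And>y w. ereal (y \<bullet> w - \<phi> y) \<le> \<psi> w"
    and "\<And>y. \<psi> (T y) = ereal (y \<bullet> T y - \<phi> y)"
    and "\<psi> \<in> borel_measurable borel"
proof -
  obtain D :: "'a set" where D: "countable D" "\<And>X. open X \<Longrightarrow> X \<noteq> {} \<Longrightarrow> \<exists>d\<in>D. d \<in> X"
    using countable_dense_setE by blast
  define \<psi> where "\<psi> = (\<lambda>w. SUP y\<in>D. ereal (y \<bullet> w - \<phi> y))"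
  have a1: "ereal (y \<bullet> w - \<phi> y) \<le> \<psi> w" for y w
  proof (rule ereal_le_epsilon2)
    fix e :: real assume e: "0 < e"
    define h where "h = (\<lambda>y. y \<bullet> w - \<phi> y)"
    have hc: "continuous_on UNIV h" unfolding h_def by (intro continuous_intros \<phi>c)
    have "open {z. h y - e < h z}"
      by (rule open_Collect_less) (auto intro: hc continuous_intros)
    moreover have "y \<in> {z. h y - e < h z}" using e by simp
    ultimately obtain d where d: "d \<in> D" "h y - e < h d" using D(2) by blast
    have "ereal (h d) \<le> \<psi> w" unfolding \<psi>_def h_def using d(1) by (rule SUP_upper)
    then have "ereal (h y - e) \<le> \<psi> w" using d(2) by (meson ereal_less_eq(3) less_imp_le order_trans)
    then have "ereal (h y - e) + ereal e \<le> \<psi> w + ereal e" by (rule add_right_mono)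
    then show "ereal (y \<bullet> w - \<phi> y) \<le> \<psi> w + ereal e" unfolding h_def by simp
  qed
  have a2: "\<psi> (T y) = ereal (y \<bullet> T y - \<phi> y)" for y
  proof (rule antisym)
    show "\<psi> (T y) \<le> ereal (y \<bullet> T y - \<phi> y)"
      unfolding \<psi>_def
    proof (rule SUP_least)
      fix y' assume "y' \<in> D"
      have "\<phi> y + T y \<bullet> (y' - y) \<le> \<phi> y'" by (rule cvx)
      then have "y' \<bullet> T y - \<phi> y' \<le> y \<bullet> T y - \<phi> y"
        by (simp add: inner_diff_right inner_commute)
      then show "ereal (y' \<bullet> T y - \<phi> y') \<le> ereal (y \<bullet> T y - \<phi> y)" by simp
    qed
    show "ereal (y \<bullet> T y - \<phi> y) \<le> \<psi> (T y)" by (rule a1)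
  qed
  have a3: "\<psi> \<in> borel_measurable borel"
  proof -
    have "(\<lambda>w. ereal (y \<bullet> w - \<phi> y)) \<in> borel_measurable borel" for y
      by (intro borel_measurable_continuous_onI continuous_intros)
    then show ?thesis unfolding \<psi>_def using D(1) by (intro borel_measurable_SUP) auto
  qed
  show ?thesis using that a1 a2 a3 by blast
qed

lemma W2_map:
  fixes \<alpha> :: "'a::euclidean_space measure" and T :: "'a \<Rightarrow> 'a" and \<phi> :: "'a \<Rightarrow> real"
  assumes P\<alpha>: "prob_space \<alpha>" and s\<alpha>: "sets \<alpha> = sets borel" and i2: "integrable \<alpha> (\<lambda>y. norm y ^ 2)"
    and Tc: "continuous_on UNIV T" and \<phi>c: "continuous_on UNIV \<phi>"
    and cvx: "\<And>y y'. \<phi> y + T y \<bullet> (y' - y) \<le> \<phi> y'"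
    and i\<phi>: "integrable \<alpha> \<phi>"
    and Tlin: "\<And>y. norm (T y) \<le> C * (1 + norm y)"
  shows "W2sq \<alpha> (distr \<alpha> borel T) = (\<integral>\<^sup>+y. ennreal (norm (y - T y) ^ 2) \<partial>\<alpha>)"
proof -
  interpret prob_space \<alpha> by (rule P\<alpha>)
  have Tm[measurable]: "T \<in> borel_measurable borel" using Tc by (rule borel_measurable_continuous_onI)
  have \<phi>m[measurable]: "\<phi> \<in> borel_measurable borel" using \<phi>c by (rule borel_measurable_continuous_onI)
  have mcong: "f \<in> measurable \<alpha> N \<longleftrightarrow> f \<in> measurable borel N" for f :: "'a \<Rightarrow> 'z" and N
    using measurable_cong_sets[OF s\<alpha> refl] by blast
  have T\<alpha>: "T \<in> measurable \<alpha> borel" using mcong Tm by blast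
  define \<beta> where "\<beta> = distr \<alpha> borel T"
  have iT2: "integrable \<alpha> (\<lambda>y. norm (T y) ^ 2)"
  proof (rule Bochner_Integration.integrable_bound)
    have "integrable \<alpha> (\<lambda>y. 1 + norm y ^ 2)" by (rule Bochner_Integration.integrable_add[OF integrable_const i2])
    then show "integrable \<alpha> (\<lambda>y. 2 * C^2 * (1 + norm y ^ 2))" by (intro integrable_mult_right)
    show "(\<lambda>y. norm (T y) ^ 2) \<in> borel_measurable \<alpha>" by (subst mcong) measurable
    show "AE y in \<alpha>. norm (norm (T y) ^ 2) \<le> norm (2 * C^2 * (1 + norm y ^ 2))"
    proof (intro AE_I2)
      fix y
      have "norm (T y) ^ 2 \<le> (C * (1 + norm y)) ^ 2" using Tlin[of y] by (intro power_mono) auto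
      also have "\<dots> = C^2 * (1 + norm y)^2" by (simp add: power_mult_distrib)
      also have "\<dots> \<le> C^2 * (2 * (1 + norm y ^ 2))"
      proof (intro mult_left_mono)
        have "0 \<le> (1 - norm y)^2" by simp
        then show "(1 + norm y)^2 \<le> 2 * (1 + norm y ^ 2)" by (simp add: power2_eq_square algebra_simps)
      qed simp
      also have "\<dots> = 2 * C^2 * (1 + norm y ^ 2)" by (simp only: mult_ac)
      finally show "norm (norm (T y) ^ 2) \<le> norm (2 * C^2 * (1 + norm y ^ 2))" by simp
    qed
  qed
  have sqb: "\<bar>a \<bullet> b\<bar> \<le> norm a ^ 2 + norm b ^ 2" for a b :: 'a
  proof -
    have "\<bar>a \<bullet> b\<bar> \<le> norm a * norm b" by (rule Cauchy_Schwarz_ineq2)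
    also have "\<dots> \<le> norm a ^ 2 + norm b ^ 2"
    proof -
      have "0 \<le> (norm a - norm b)^2" by simp
      then have h: "2 * (norm a * norm b) \<le> norm a * norm a + norm b * norm b"
        by (simp add: power2_eq_square algebra_simps)
      have h0: "0 \<le> norm a * norm b" by simp
      have "norm a * norm b \<le> norm a * norm a + norm b * norm b" using h h0 by linarith
      then show ?thesis by (simp add: power2_eq_square)
    qed
    finally show ?thesis .
  qed
  have iyT: "integrable \<alpha> (\<lambda>y. y \<bullet> T y)"
  proof (rule Bochner_Integration.integrable_bound)
    show "integrable \<alpha> (\<lambda>y. norm y ^ 2 + norm (T y) ^ 2)" using i2 iT2 by auto
    show "(\<lambda>y. y \<bullet> T y) \<in> borel_measurable \<alpha>" by (subst mcong) measurable
    show "AE y in \<alpha>. norm (y \<bullet> T y) \<le> norm (norm y ^ 2 + norm (T y) ^ 2)"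
      using sqb by (intro AE_I2) simp
  qed
  have idiff: "integrable \<alpha> (\<lambda>y. norm (y - T y) ^ 2)"
  proof -
    have "norm (y - T y) ^ 2 = norm y ^ 2 + norm (T y) ^ 2 - 2 * (y \<bullet> T y)" for y
      by (simp add: power2_norm_eq_inner inner_diff_left inner_diff_right inner_commute)
    then show ?thesis using i2 iT2 iyT by simp
  qed
  have nnL: "(\<integral>\<^sup>+y. ennreal (norm (y - T y) ^ 2) \<partial>\<alpha>) = ennreal (\<integral>y. norm (y - T y) ^ 2 \<partial>\<alpha>)"
    using idiff by (intro nn_integral_eq_integral) auto
  have pm: "(\<lambda>y. (y, T y)) \<in> measurable \<alpha> borel"
    by (subst mcong) (intro borel_measurable_continuous_onI continuous_intros Tc)
  define \<pi>0 where "\<pi>0 = distr \<alpha> borel (\<lambda>y. (y, T y))"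
  have fst_m: "fst \<in> measurable (borel :: ('a \<times> 'a) measure) borel" by simp
  have snd_m: "snd \<in> measurable (borel :: ('a \<times> 'a) measure) borel" by simp
  have c0: "\<pi>0 \<in> couplings \<alpha> \<beta>"
    unfolding couplings_def
  proof (intro CollectI conjI)
    show "prob_space \<pi>0" unfolding \<pi>0_def by (rule prob_space_distr[OF pm])
    show "sets \<pi>0 = sets borel" unfolding \<pi>0_def by simp
    have "distr \<pi>0 borel fst = distr \<alpha> borel (fst \<circ> (\<lambda>y. (y, T y)))"
      unfolding \<pi>0_def by (rule distr_distr[OF fst_m pm])
    also have "fst \<circ> (\<lambda>y. (y, T y)) = (\<lambda>y. y)" by auto
    also have "distr \<alpha> borel (\<lambda>y. y) = \<alpha>" by (rule distr_id2) (simp add: s\<alpha>)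
    finally show "distr \<pi>0 borel fst = \<alpha>" .
    have "distr \<pi>0 borel snd = distr \<alpha> borel (snd \<circ> (\<lambda>y. (y, T y)))"
      unfolding \<pi>0_def by (rule distr_distr[OF snd_m pm])
    also have "snd \<circ> (\<lambda>y. (y, T y)) = T" by auto
    finally show "distr \<pi>0 borel snd = \<beta>" unfolding \<beta>_def .
  qed
  have up: "W2sq \<alpha> \<beta> \<le> (\<integral>\<^sup>+y. ennreal (norm (y - T y) ^ 2) \<partial>\<alpha>)"
  proof -
    have "W2sq \<alpha> \<beta> \<le> (\<integral>\<^sup>+p. ennreal (norm (fst p - snd p) ^ 2) \<partial>\<pi>0)"
      unfolding W2sq_def using c0 by (rule INF_lower)
    also have "\<dots> = (\<integral>\<^sup>+y. ennreal (norm (y - T y) ^ 2) \<partial>\<alpha>)"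
      unfolding \<pi>0_def by (subst nn_integral_distr[OF pm]) simp_all
    finally show ?thesis .
  qed
  obtain \<psi> :: "'a \<Rightarrow> ereal" where a1: "\<And>y w. ereal (y \<bullet> w - \<phi> y) \<le> \<psi> w"
    and a2: "\<And>y. \<psi> (T y) = ereal (y \<bullet> T y - \<phi> y)" and a3[measurable]: "\<psi> \<in> borel_measurable borel"
    using conjugate_exists[OF \<phi>c cvx] by blast
  define \<psi>r where "\<psi>r = (\<lambda>w. real_of_ereal (\<psi> w))"
  have \<psi>rm[measurable]: "\<psi>r \<in> borel_measurable borel" unfolding \<psi>r_def by measurable
  have \<psi>rT: "\<psi>r (T y) = y \<bullet> T y - \<phi> y" for y unfolding \<psi>r_def a2 by simp
  have \<psi>fin: "\<psi> w = ereal (\<psi>r w)" if "\<psi> w < \<infinity>" for w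
  proof -
    have "ereal (0 \<bullet> w - \<phi> 0) \<le> \<psi> w" by (rule a1)
    then have "\<psi> w \<noteq> - \<infinity>" by auto
    with that show ?thesis unfolding \<psi>r_def by (cases "\<psi> w") auto
  qed
  have Sm: "{w \<in> space borel. \<psi> w < \<infinity>} \<in> sets (borel :: 'a measure)" by measurable
  have AE\<beta>: "AE w in \<beta>. \<psi> w < \<infinity>"
    unfolding \<beta>_def using T\<alpha> Sm by (subst AE_distr_iff) (auto simp: a2)
  have low: "(\<integral>\<^sup>+y. ennreal (norm (y - T y) ^ 2) \<partial>\<alpha>) \<le> (\<integral>\<^sup>+p. ennreal (norm (fst p - snd p) ^ 2) \<partial>\<pi>)"
    if \<pi>c: "\<pi> \<in> couplings \<alpha> \<beta>" for \<pi>
  proof -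
    note c = couplingsD[OF \<pi>c]
    interpret \<pi>: prob_space \<pi> by (rule c(1))
    have pcong: "f \<in> measurable \<pi> N \<longleftrightarrow> f \<in> measurable borel N" for f :: "'a \<times> 'a \<Rightarrow> 'z" and N
      using measurable_cong_sets[OF c(2) refl] by blast
    have fm: "fst \<in> measurable \<pi> borel" by (subst pcong) (rule fst_m)
    have sm: "snd \<in> measurable \<pi> borel" by (subst pcong) (rule snd_m)
    have tr1: "(\<integral>p. f (fst p) \<partial>\<pi>) = (\<integral>y. f y \<partial>\<alpha>)" "integrable \<pi> (\<lambda>p. f (fst p)) \<longleftrightarrow> integrable \<alpha> f"
      if "f \<in> borel_measurable borel" for f :: "'a \<Rightarrow> real"
      using integral_distr[OF fm that] integrable_distr_eq[OF fm that] c(3) by simp_all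
    have tr2: "(\<integral>p. f (snd p) \<partial>\<pi>) = (\<integral>y. f y \<partial>\<beta>)" "integrable \<pi> (\<lambda>p. f (snd p)) \<longleftrightarrow> integrable \<beta> f"
      if "f \<in> borel_measurable borel" for f :: "'a \<Rightarrow> real"
      using integral_distr[OF sm that] integrable_distr_eq[OF sm that] c(4) by simp_all
    have trb: "(\<integral>w. f w \<partial>\<beta>) = (\<integral>y. f (T y) \<partial>\<alpha>)" "integrable \<beta> f \<longleftrightarrow> integrable \<alpha> (\<lambda>y. f (T y))"
      if "f \<in> borel_measurable borel" for f :: "'a \<Rightarrow> real"
      unfolding \<beta>_def using integral_distr[OF T\<alpha> that] integrable_distr_eq[OF T\<alpha> that] by simp_all
    define F1 where "F1 = (\<lambda>y. norm y ^ 2 - 2 * \<phi> y)"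
    define F2 where "F2 = (\<lambda>w. norm w ^ 2 - 2 * \<psi>r w)"
    have F1m[measurable]: "F1 \<in> borel_measurable borel" unfolding F1_def by measurable
    have F2m[measurable]: "F2 \<in> borel_measurable borel" unfolding F2_def by measurable
    have iF1: "integrable \<alpha> F1" unfolding F1_def using i2 i\<phi> by auto
    have F2T: "F2 (T y) = norm (T y) ^ 2 - 2 * (y \<bullet> T y - \<phi> y)" for y unfolding F2_def \<psi>rT ..
    have iF2: "integrable \<beta> F2" using trb(2)[OF F2m] iT2 iyT i\<phi> unfolding F2T by auto
    have i1: "integrable \<pi> (\<lambda>p. F1 (fst p))" using tr1(2)[OF F1m] iF1 by simp
    have i2': "integrable \<pi> (\<lambda>p. F2 (snd p))" using tr2(2)[OF F2m] iF2 by simp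
    have in1: "integrable \<pi> (\<lambda>p. norm (fst p) ^ 2)" using tr1(2)[of "\<lambda>y. norm y ^ 2"] i2 by simp
    have in2: "integrable \<pi> (\<lambda>p. norm (snd p) ^ 2)"
      using tr2(2)[of "\<lambda>y. norm y ^ 2"] trb(2)[of "\<lambda>y. norm y ^ 2"] iT2 by simp
    have idp: "integrable \<pi> (\<lambda>p. norm (fst p - snd p) ^ 2)"
    proof (rule Bochner_Integration.integrable_bound)
      show "integrable \<pi> (\<lambda>p. 3 * norm (fst p) ^ 2 + 3 * norm (snd p) ^ 2)" using in1 in2 by auto
      show "(\<lambda>p. norm (fst p - snd p) ^ 2) \<in> borel_measurable \<pi>" by (subst pcong) measurable
      show "AE p in \<pi>. norm (norm (fst p - snd p) ^ 2) \<le> norm (3 * norm (fst p) ^ 2 + 3 * norm (snd p) ^ 2)"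
      proof (intro AE_I2)
        fix p :: "'a \<times> 'a"
        have e: "norm (fst p - snd p) ^ 2 = norm (fst p) ^ 2 + norm (snd p) ^ 2 - 2 * (fst p \<bullet> snd p)"
          by (simp add: power2_norm_eq_inner inner_diff_left inner_diff_right inner_commute)
        have "- (fst p \<bullet> snd p) \<le> norm (fst p) ^ 2 + norm (snd p) ^ 2"
          using sqb[of "fst p" "snd p"] by (rule abs_le_D2)
        then have "norm (fst p - snd p) ^ 2 \<le> 3 * norm (fst p) ^ 2 + 3 * norm (snd p) ^ 2"
          unfolding e by linarith
        moreover have "0 \<le> 3 * norm (fst p) ^ 2 + 3 * norm (snd p) ^ 2" by simp
        ultimately show "norm (norm (fst p - snd p) ^ 2) \<le> norm (3 * norm (fst p) ^ 2 + 3 * norm (snd p) ^ 2)"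
          by simp
      qed
    qed
    have AE\<pi>: "AE p in \<pi>. \<psi> (snd p) < \<infinity>"
    proof -
      have "AE w in distr \<pi> borel snd. \<psi> w < \<infinity>" unfolding c(4) by (rule AE\<beta>)
      then show ?thesis using sm Sm by (subst (asm) AE_distr_iff) auto
    qed
    have pw: "AE p in \<pi>. F1 (fst p) + F2 (snd p) \<le> norm (fst p - snd p) ^ 2"
    proof (rule AE_mp[OF AE\<pi>], intro AE_I2 impI)
      fix p :: "'a \<times> 'a" assume "\<psi> (snd p) < \<infinity>"
      then have e: "\<psi> (snd p) = ereal (\<psi>r (snd p))" by (rule \<psi>fin)
      have "ereal (fst p \<bullet> snd p - \<phi> (fst p)) \<le> \<psi> (snd p)" by (rule a1)
      then have le: "fst p \<bullet> snd p - \<phi> (fst p) \<le> \<psi>r (snd p)" unfolding e by simp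
      have "norm (fst p - snd p) ^ 2 = norm (fst p) ^ 2 + norm (snd p) ^ 2 - 2 * (fst p \<bullet> snd p)"
        by (simp add: power2_norm_eq_inner inner_diff_left inner_diff_right inner_commute)
      then show "F1 (fst p) + F2 (snd p) \<le> norm (fst p - snd p) ^ 2"
        unfolding F1_def F2_def using le by simp
    qed
    have "(\<integral>y. norm (y - T y) ^ 2 \<partial>\<alpha>) = (\<integral>y. F1 y + F2 (T y) \<partial>\<alpha>)"
    proof (rule Bochner_Integration.integral_cong[OF refl])
      fix y
      show "norm (y - T y) ^ 2 = F1 y + F2 (T y)"
        unfolding F2T F1_def by (simp add: power2_norm_eq_inner inner_diff_left inner_diff_right inner_commute)
    qed
    also have "\<dots> = (\<integral>y. F1 y \<partial>\<alpha>) + (\<integral>y. F2 (T y) \<partial>\<alpha>)"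
      using iF1 iF2 trb(2)[OF F2m] by (intro Bochner_Integration.integral_add) auto
    also have "\<dots> = (\<integral>p. F1 (fst p) \<partial>\<pi>) + (\<integral>p. F2 (snd p) \<partial>\<pi>)"
      using tr1(1)[OF F1m] tr2(1)[OF F2m] trb(1)[OF F2m] by simp
    also have "\<dots> = (\<integral>p. F1 (fst p) + F2 (snd p) \<partial>\<pi>)"
      using i1 i2' by (intro Bochner_Integration.integral_add[symmetric])
    also have "\<dots> \<le> (\<integral>p. norm (fst p - snd p) ^ 2 \<partial>\<pi>)"
      using i1 i2' idp pw by (intro integral_mono_AE) auto
    finally have "(\<integral>y. norm (y - T y) ^ 2 \<partial>\<alpha>) \<le> (\<integral>p. norm (fst p - snd p) ^ 2 \<partial>\<pi>)" .
    moreover have "(\<integral>\<^sup>+p. ennreal (norm (fst p - snd p) ^ 2) \<partial>\<pi>) = ennreal (\<integral>p. norm (fst p - snd p) ^ 2 \<partial>\<pi>)"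
      using idp by (intro nn_integral_eq_integral) auto
    ultimately show ?thesis unfolding nnL by (simp add: ennreal_leI)
  qed
  have "(\<integral>\<^sup>+y. ennreal (norm (y - T y) ^ 2) \<partial>\<alpha>) \<le> W2sq \<alpha> \<beta>"
    unfolding W2sq_def by (rule INF_greatest) (rule low)
  with up show ?thesis unfolding \<beta>_def by (rule antisym)
qed

lemma pair_sets_borel:
  assumes "sets M = sets (borel :: 'a::euclidean_space measure)"
  shows "sets (M \<Otimes>\<^sub>M (borel :: 'b::euclidean_space measure)) = sets (borel :: ('a \<times> 'b) measure)"
proof -
  have "sets (M \<Otimes>\<^sub>M (borel :: 'b measure)) = sets (borel \<Otimes>\<^sub>M (borel :: 'b measure))"
    by (rule sets_pair_measure_cong[OF assms refl])
  also have "\<dots> = sets (borel :: ('a \<times> 'b) measure)" by (rule arg_cong[where f=sets, OF borel_prod])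
  finally show ?thesis .
qed

lemma kernel_nn_meas:
  fixes M :: "'a::euclidean_space measure" and K :: "'a \<Rightarrow> 'b::euclidean_space measure"
  assumes sM: "sets M = sets borel" and K: "K \<in> measurable M (subprob_algebra borel)"
    and f: "f \<in> borel_measurable (borel :: ('a \<times> 'b) measure)"
  shows "(\<lambda>x. \<integral>\<^sup>+y. f (x, y) \<partial>K x) \<in> borel_measurable M"
proof -
  have "f \<in> borel_measurable (M \<Otimes>\<^sub>M borel)"
    by (subst measurable_cong_sets[OF pair_sets_borel[OF sM] refl]) (rule f)
  moreover have "(\<lambda>(x, y). f (x, y)) = f" by auto
  ultimately have "(\<lambda>(x, y). f (x, y)) \<in> borel_measurable (M \<Otimes>\<^sub>M borel)" by simp
  then show ?thesis using nn_integral_measurable_subprob_algebra2[OF _ K] by blast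
qed

lemma side_formula:
  fixes M :: "'a::euclidean_space measure" and K K1 :: "'a \<Rightarrow> 'a measure"
    and \<gamma> :: "('a \<times> 'a) measure" and Z :: "'a \<times> 'a \<Rightarrow> 'a"
    and k Tz :: "'a \<Rightarrow> 'a" and \<phi>z :: "'a \<Rightarrow> real"
  assumes D: "disint_fst M K \<gamma>" and D1: "disint_fst M K1 (distr \<gamma> borel (\<lambda>p. (fst p, Z p)))"
    and PM: "prob_space M" and sM: "sets M = sets borel" and sg: "sets \<gamma> = sets borel"
    and Zf: "\<And>x y. Z (x, y) = k x + Tz y"
    and km: "k \<in> borel_measurable borel" and Tzc: "continuous_on UNIV Tz" and \<phi>zc: "continuous_on UNIV \<phi>z"
    and cvx0: "\<And>y y'. \<phi>z y + Tz y \<bullet> (y' - y) \<le> \<phi>z y'"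
    and Tzlin: "\<And>y. norm (Tz y) \<le> C * (1 + norm y)"
    and \<phi>zb: "\<And>y. \<bar>\<phi>z y\<bar> \<le> C * (1 + norm y ^ 2)"
    and fin: "(\<integral>\<^sup>+p. ennreal (norm (snd p) ^ 2) \<partial>\<gamma>) < \<infinity>"
  shows "(\<integral>\<^sup>+x. ennreal (1/2) * W2sq (K x) (K1 x) \<partial>M) =
         ennreal (1/2) * (\<integral>\<^sup>+p. ennreal (norm (snd p - Z p) ^ 2) \<partial>\<gamma>)"
proof -
  interpret prob_space M by (rule PM)
  have M0: "space M \<noteq> {}" by (rule not_empty)
  note P = disint_fst_props[OF D sM sg M0]
  have Tzm[measurable]: "Tz \<in> borel_measurable borel" using Tzc by (rule borel_measurable_continuous_onI)
  note km[measurable]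
  have Zfun: "Z = (\<lambda>p. k (fst p) + Tz (snd p))" using Zf by (auto simp: fun_eq_iff)
  have Zm[measurable]: "Z \<in> borel_measurable borel" unfolding Zfun by measurable
  have C0: "0 \<le> C" using Tzlin[of 0] by (smt (verit) norm_ge_zero mult_cancel_left1 norm_zero)
  have KU: "AE x in M. K1 x = distr (K x) borel (\<lambda>y. Z (x, y))"
    by (rule kernel_unique[OF D D1 Zm sM sg PM])
  have sqm: "(\<lambda>p::'a \<times> 'a. ennreal (norm (snd p) ^ 2)) \<in> borel_measurable borel" by measurable
  have "(\<integral>\<^sup>+x. \<integral>\<^sup>+y. ennreal (norm y ^ 2) \<partial>K x \<partial>M) < \<infinity>"
    using fin P(6)[OF sqm] by simp
  then have AEfin: "AE x in M. (\<integral>\<^sup>+y. ennreal (norm y ^ 2) \<partial>K x) \<noteq> \<infinity>"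
    using kernel_nn_meas[OF sM P(3) sqm] by (intro nn_integral_PInf_AE) auto
  have pt: "ennreal (1/2) * W2sq (K x) (K1 x) = ennreal (1/2) * (\<integral>\<^sup>+y. ennreal (norm (y - Z (x, y)) ^ 2) \<partial>K x)"
    if x: "x \<in> space M" and k1: "K1 x = distr (K x) borel (\<lambda>y. Z (x, y))"
      and fx: "(\<integral>\<^sup>+y. ennreal (norm y ^ 2) \<partial>K x) \<noteq> \<infinity>" for x
  proof -
    have pK: "prob_space (K x)" and sK: "sets (K x) = sets borel" using P(1,2)[OF x] by auto
    interpret Kx: prob_space "K x" by (rule pK)
    have mc: "f \<in> borel_measurable (K x) \<longleftrightarrow> f \<in> borel_measurable borel" for f :: "'a \<Rightarrow> real"
      using measurable_cong_sets[OF sK refl] by blast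
    have i2: "integrable (K x) (\<lambda>y. norm y ^ 2)"
      unfolding integrable_iff_bounded using fx by (subst mc) (auto simp: less_top)
    have iid: "integrable (K x) (\<lambda>y. y)"
    proof (rule Bochner_Integration.integrable_bound)
      show "integrable (K x) (\<lambda>y. 1 + norm y ^ 2)" by (rule Bochner_Integration.integrable_add[OF Kx.integrable_const i2])
      show "(\<lambda>y. y) \<in> borel_measurable (K x)" by (subst measurable_cong_sets[OF sK refl]) simp
      show "AE y in K x. norm y \<le> norm (1 + norm y ^ 2)" using norm_le_1_sq by (intro AE_I2) simp
    qed
    define T where "T = (\<lambda>y. k x + Tz y)"
    define \<phi> where "\<phi> = (\<lambda>y. \<phi>z y + k x \<bullet> y)"
    have Tc: "continuous_on UNIV T" unfolding T_def by (intro continuous_intros Tzc)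
    have \<phi>c: "continuous_on UNIV \<phi>" unfolding \<phi>_def by (intro continuous_intros \<phi>zc)
    have cvx: "\<phi> y + T y \<bullet> (y' - y) \<le> \<phi> y'" for y y'
      using cvx0[of y y'] unfolding \<phi>_def T_def by (simp add: inner_add_left inner_diff_right)
    have i\<phi>: "integrable (K x) \<phi>"
    proof -
      have "integrable (K x) \<phi>z"
      proof (rule Bochner_Integration.integrable_bound)
        show "integrable (K x) (\<lambda>y. C * (1 + norm y ^ 2))"
          using Bochner_Integration.integrable_add[OF Kx.integrable_const i2] by (intro integrable_mult_right)
        show "\<phi>z \<in> borel_measurable (K x)" using mc \<phi>zc borel_measurable_continuous_onI by blast
        show "AE y in K x. norm (\<phi>z y) \<le> norm (C * (1 + norm y ^ 2))"
          using \<phi>zb by (intro AE_I2) (simp add: C0 abs_mult)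
      qed
      moreover have "integrable (K x) (\<lambda>y. k x \<bullet> y)" using iid by simp
      ultimately show ?thesis unfolding \<phi>_def by simp
    qed
    have Tlin: "norm (T y) \<le> (norm (k x) + C) * (1 + norm y)" for y
    proof -
      have "norm (T y) \<le> norm (k x) + norm (Tz y)" unfolding T_def by (rule norm_triangle_ineq)
      also have "\<dots> \<le> norm (k x) + C * (1 + norm y)" using Tzlin[of y] by simp
      also have "\<dots> \<le> (norm (k x) + C) * (1 + norm y)" by (simp add: algebra_simps)
      finally show ?thesis .
    qed
    have W: "W2sq (K x) (distr (K x) borel T) = (\<integral>\<^sup>+y. ennreal (norm (y - T y) ^ 2) \<partial>K x)"
      by (rule W2_map[OF pK sK i2 Tc \<phi>c cvx i\<phi> Tlin])
    have TZ: "(\<lambda>y. Z (x, y)) = T" unfolding T_def using Zf by auto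
    show ?thesis unfolding k1 TZ W by (simp add: T_def Zf)
  qed
  have "(\<integral>\<^sup>+x. ennreal (1/2) * W2sq (K x) (K1 x) \<partial>M) =
        (\<integral>\<^sup>+x. ennreal (1/2) * (\<integral>\<^sup>+y. ennreal (norm (y - Z (x, y)) ^ 2) \<partial>K x) \<partial>M)"
  proof (rule nn_integral_cong_AE)
    show "AE x in M. ennreal (1/2) * W2sq (K x) (K1 x) = ennreal (1/2) * (\<integral>\<^sup>+y. ennreal (norm (y - Z (x, y)) ^ 2) \<partial>K x)"
    proof (rule AE_mp[OF KU], rule AE_mp[OF AEfin], intro AE_I2 impI)
      fix x assume x: "x \<in> space M" and fx: "(\<integral>\<^sup>+y. ennreal (norm y ^ 2) \<partial>K x) \<noteq> \<infinity>"
        and k1: "K1 x = distr (K x) borel (\<lambda>y. Z (x, y))"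
      show "ennreal (1/2) * W2sq (K x) (K1 x) = ennreal (1/2) * (\<integral>\<^sup>+y. ennreal (norm (y - Z (x, y)) ^ 2) \<partial>K x)"
        by (rule pt[OF x k1 fx])
    qed
  qed
  also have "\<dots> = ennreal (1/2) * (\<integral>\<^sup>+x. \<integral>\<^sup>+y. ennreal (norm (y - Z (x, y)) ^ 2) \<partial>K x \<partial>M)"
  proof (rule nn_integral_cmult)
    have "(\<lambda>p::'a \<times> 'a. ennreal (norm (snd p - Z p) ^ 2)) \<in> borel_measurable borel" by measurable
    from kernel_nn_meas[OF sM P(3) this]
    show "(\<lambda>x. \<integral>\<^sup>+y. ennreal (norm (y - Z (x, y)) ^ 2) \<partial>K x) \<in> borel_measurable M" by simp
  qed
  also have "(\<integral>\<^sup>+x. \<integral>\<^sup>+y. ennreal (norm (y - Z (x, y)) ^ 2) \<partial>K x \<partial>M) = (\<integral>\<^sup>+p. ennreal (norm (snd p - Z p) ^ 2) \<partial>\<gamma>)"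
  proof -
    have "(\<lambda>p::'a \<times> 'a. ennreal (norm (snd p - Z p) ^ 2)) \<in> borel_measurable borel" by measurable
    from P(6)[OF this] show ?thesis by simp
  qed
  finally show ?thesis .
qed

lemma disint_snd_swap:
  fixes \<nu> :: "'a::euclidean_space measure" and Ky :: "'a \<Rightarrow> 'a measure" and \<gamma> :: "('a \<times> 'a) measure"
  assumes D: "disint_snd \<nu> Ky \<gamma>" and sg: "sets \<gamma> = sets borel"
  shows "disint_fst \<nu> Ky (distr \<gamma> borel (\<lambda>p. (snd p, fst p)))"
  unfolding disint_fst_def
proof (intro conjI ballI)
  show "Ky \<in> measurable \<nu> (prob_algebra borel)" using D unfolding disint_snd_def by simp
  fix A :: "('a \<times> 'a) set" assume A: "A \<in> sets borel"
  have swm: "(\<lambda>p::'a \<times> 'a. (snd p, fst p)) \<in> measurable borel borel"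
    by (intro borel_measurable_continuous_onI continuous_intros)
  have swm': "(\<lambda>p::'a \<times> 'a. (snd p, fst p)) \<in> measurable \<gamma> borel"
    by (subst measurable_cong_sets[OF sg refl]) (rule swm)
  have A': "(\<lambda>p. (snd p, fst p)) -` A \<in> sets borel" using measurable_sets[OF swm A] by simp
  have sp: "space \<gamma> = UNIV" using sets_eq_imp_space_eq[OF sg] by simp
  have "emeasure (distr \<gamma> borel (\<lambda>p. (snd p, fst p))) A = emeasure \<gamma> ((\<lambda>p. (snd p, fst p)) -` A)"
    using emeasure_distr[OF swm' A] sp by simp
  also have "\<dots> = (\<integral>\<^sup>+y. emeasure (Ky y) ((\<lambda>x. (x, y)) -` ((\<lambda>p. (snd p, fst p)) -` A)) \<partial>\<nu>)"
    using D A' unfolding disint_snd_def by blast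
  also have "\<dots> = (\<integral>\<^sup>+y. emeasure (Ky y) (Pair y -` A) \<partial>\<nu>)"
    by (simp add: vimage_def)
  finally show "emeasure (distr \<gamma> borel (\<lambda>p. (snd p, fst p))) A = (\<integral>\<^sup>+y. emeasure (Ky y) (Pair y -` A) \<partial>\<nu>)" .
qed

lemma fin_second_moment:
  fixes \<gamma> :: "('a::euclidean_space \<times> 'a) measure"
  assumes gc: "\<gamma> \<in> couplings \<mu> \<nu>" and M: "\<mu> \<in> P2b b" and N: "\<nu> \<in> P2b b"
  shows "(\<integral>\<^sup>+p. ennreal (norm (fst p) ^ 2) \<partial>\<gamma>) < \<infinity>" "(\<integral>\<^sup>+p. ennreal (norm (snd p) ^ 2) \<partial>\<gamma>) < \<infinity>"
proof -
  have "integrable \<gamma> (\<lambda>p. norm (fst p) ^ 2)"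
    using coupling_integral_fst(2)[OF gc, of "\<lambda>x. norm x ^ 2"] P2bD(3)[OF M] by simp
  then show "(\<integral>\<^sup>+p. ennreal (norm (fst p) ^ 2) \<partial>\<gamma>) < \<infinity>"
    unfolding integrable_iff_bounded by simp
  have "integrable \<gamma> (\<lambda>p. norm (snd p) ^ 2)"
    using coupling_integral_snd(2)[OF gc, of "\<lambda>x. norm x ^ 2"] P2bD(3)[OF N] by simp
  then show "(\<integral>\<^sup>+p. ennreal (norm (snd p) ^ 2) \<partial>\<gamma>) < \<infinity>"
    unfolding integrable_iff_bounded by simp
qed

theorem corollary6p4:
  fixes b :: "'a::euclidean_space"
    and \<mu> \<nu> :: "'a measure"
    and u :: "'a \<Rightarrow> real" and g :: "'a \<Rightarrow> 'a"
    and \<gamma> :: "('a \<times> 'a) measure"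
    and Kx Ky K1 K2 :: "'a \<Rightarrow> 'a measure"
  assumes "\<mu> \<in> P2b b" and "\<nu> \<in> P2b b"
    and "optimal_potential \<mu> \<nu> u g"
    and "\<gamma> \<in> Gamma_bar \<mu> \<nu> g"
    and "disint_fst \<mu> Kx \<gamma>"
    and "disint_snd \<nu> Ky \<gamma>"
    and "disint_fst \<mu> K1 (distr \<gamma> borel (\<lambda>p. (fst p, zeta g p)))"
    and "disint_fst \<nu> K2 (distr \<gamma> borel (\<lambda>p. (snd p, zeta g p)))"
  shows "ennreal (Z2 \<mu> \<nu>) =
           (\<integral>\<^sup>+x. ennreal (1/2) * W2sq (Kx x) (K1 x) \<partial>\<mu>) +
           (\<integral>\<^sup>+y. ennreal (1/2) * W2sq (Ky y) (K2 y) \<partial>\<nu>)"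
proof -
  note M = assms(1) and N = assms(2) and opt = assms(3) and G = assms(4)
    and Dx = assms(5) and Dy = assms(6) and D1 = assms(7) and D2 = assms(8)
  have gc: "\<gamma> \<in> couplings \<mu> \<nu>" using G unfolding Gamma_bar_def Gamma_def by auto
  note c = couplingsD[OF gc]
  have u: "grad_lip1 u g" using opt unfolding optimal_potential_def by simp
  note gp = grad_lip1_props[OF u]
  note gm[measurable] = gp(4)
  define C where "C = 1 + norm (g 0) + \<bar>u 0\<bar>"
  have C1: "1 \<le> C" unfolding C_def by simp
  have ubd: "\<bar>u y\<bar> \<le> C * (1 + norm y ^ 2)" for y
  proof -
    have a: "\<bar>u y\<bar> \<le> \<bar>u 0\<bar> + norm (g 0) * norm y + norm y ^ 2" by (rule gp(6))
    have b: "norm (g 0) * norm y \<le> norm (g 0) * (1 + norm y ^ 2)"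
      by (rule mult_left_mono[OF norm_le_1_sq]) simp
    have c: "\<bar>u 0\<bar> \<le> \<bar>u 0\<bar> * (1 + norm y ^ 2)" by (simp add: mult_le_cancel_left1)
    have "C * (1 + norm y ^ 2) = \<bar>u 0\<bar> * (1 + norm y ^ 2) + norm (g 0) * (1 + norm y ^ 2) + (1 + norm y ^ 2)"
      unfolding C_def by (simp add: algebra_simps)
    then show ?thesis using a b c by simp
  qed
  have Tbd: "norm ((1/2) *\<^sub>R (y + s *\<^sub>R g y)) \<le> C * (1 + norm y)" if s: "\<bar>s\<bar> = 1" for y s
  proof -
    have "norm ((1/2) *\<^sub>R (y + s *\<^sub>R g y)) = (1/2) * norm (y + s *\<^sub>R g y)" by simp
    also have "\<dots> \<le> (1/2) * (norm y + norm (g y))"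
      using norm_triangle_ineq[of y "s *\<^sub>R g y"] s by simp
    also have "\<dots> \<le> (1/2) * (norm y + (norm (g 0) + norm y))" using gp(5)[of y] by simp
    also have "\<dots> \<le> C * (1 + norm y)"
    proof -
      have h1: "norm (g 0) \<le> C" unfolding C_def by simp
      have "norm (g 0) * norm y \<le> C * norm y" using h1 by (rule mult_right_mono) simp
      moreover have "1 * norm y \<le> C * norm y" using C1 by (rule mult_right_mono) simp
      ultimately have h3: "norm y \<le> C * norm y" by simp
      have e1: "(1/2) * (norm y + (norm (g 0) + norm y)) = norm y + norm (g 0) / 2" by simp
      have e2: "C * (1 + norm y) = C + C * norm y" by (simp add: algebra_simps)
      have "0 \<le> norm (g 0)" by simp
      then show ?thesis unfolding e1 e2 using h1 h3 by linarith
    qed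
    finally show ?thesis .
  qed
  have \<phi>bd: "\<bar>(norm y ^ 2 + s * u y) / 4\<bar> \<le> C * (1 + norm y ^ 2)" if s: "\<bar>s\<bar> = 2" for y s
  proof -
    have "\<bar>norm y ^ 2 + s * u y\<bar> \<le> norm y ^ 2 + 2 * \<bar>u y\<bar>"
      using abs_triangle_ineq[of "norm y ^ 2" "s * u y"] s by (simp add: abs_mult)
    also have "\<dots> \<le> C * (1 + norm y ^ 2) + 2 * (C * (1 + norm y ^ 2))"
    proof -
      have "norm y ^ 2 \<le> C * (1 + norm y ^ 2)"
        using C1 by (smt (verit) mult_le_cancel_right1 zero_le_power2)
      then show ?thesis using ubd[of y] by simp
    qed
    finally have "\<bar>norm y ^ 2 + s * u y\<bar> \<le> 3 * (C * (1 + norm y ^ 2))" by simp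
    moreover have "0 \<le> C * (1 + norm y ^ 2)" using C1 by simp
    ultimately show ?thesis by simp
  qed
  have uc: "continuous_on UNIV u" "continuous_on UNIV g" using gp(1,2) .
  have sM: "sets \<mu> = sets borel" and sN: "sets \<nu> = sets borel" using P2bD(2)[OF M] P2bD(2)[OF N] by auto
  have PM: "prob_space \<mu>" and PN: "prob_space \<nu>" using P2bD(1)[OF M] P2bD(1)[OF N] by auto
  note fin = fin_second_moment[OF gc M N]
  have X: "(\<integral>\<^sup>+x. ennreal (1/2) * W2sq (Kx x) (K1 x) \<partial>\<mu>) =
        ennreal (1/2) * (\<integral>\<^sup>+p. ennreal (norm (snd p - zeta g p) ^ 2) \<partial>\<gamma>)"
  proof (rule side_formula[OF Dx D1 PM sM c(2), where k = "\<lambda>x. (1/2) *\<^sub>R (x + g x)"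
        and Tz = "\<lambda>y. (1/2) *\<^sub>R (y + (-1) *\<^sub>R g y)" and \<phi>z = "\<lambda>y. (norm y ^ 2 + (-2) * u y) / 4" and C = C])
    show "zeta g (x, y) = (1/2) *\<^sub>R (x + g x) + (1/2) *\<^sub>R (y + (-1) *\<^sub>R g y)" for x y
      unfolding zeta_def by (simp add: algebra_simps)
    show "(\<lambda>x. (1/2) *\<^sub>R (x + g x)) \<in> borel_measurable borel" by measurable
    show "continuous_on UNIV (\<lambda>y. (1/2) *\<^sub>R (y + (-1) *\<^sub>R g y))" by (intro continuous_intros uc)
    show "continuous_on UNIV (\<lambda>y. (norm y ^ 2 + (-2) * u y) / 4)" by (intro continuous_intros uc) auto
    show "(norm y ^ 2 + (-2) * u y) / 4 + (1/2) *\<^sub>R (y + (-1) *\<^sub>R g y) \<bullet> (y' - y) \<le> (norm y' ^ 2 + (-2) * u y') / 4" for y y'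
    proof -
      have c11: "u y' - u y - g y \<bullet> (y' - y) \<le> (1/2) * norm (y' - y) ^ 2"
        using c11_bound[OF u, of y' y] abs_le_D1 by blast
      have "norm (y' - y) ^ 2 = norm y' ^ 2 - 2 * (y \<bullet> y') + norm y ^ 2"
        by (simp add: power2_norm_eq_inner inner_diff_left inner_diff_right inner_commute)
      moreover have "norm y ^ 2 = y \<bullet> y" by (simp add: power2_norm_eq_inner)
      ultimately show ?thesis using c11
        by (simp add: inner_diff_left inner_diff_right inner_add_left inner_add_right inner_scaleR_left inner_scaleR_right field_simps inner_commute)
    qed
    show "norm ((1/2) *\<^sub>R (y + (-1) *\<^sub>R g y)) \<le> C * (1 + norm y)" for y by (rule Tbd) simp
    show "\<bar>(norm y ^ 2 + (-2) * u y) / 4\<bar> \<le> C * (1 + norm y ^ 2)" for y by (rule \<phi>bd) simp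
    show "(\<integral>\<^sup>+p. ennreal (norm (snd p) ^ 2) \<partial>\<gamma>) < \<infinity>" by (rule fin(2))
  qed
  define \<gamma>' where "\<gamma>' = distr \<gamma> borel (\<lambda>p. (snd p, fst p))"
  have swm: "(\<lambda>p::'a \<times> 'a. (snd p, fst p)) \<in> measurable borel borel"
    by (intro borel_measurable_continuous_onI continuous_intros)
  have swm': "(\<lambda>p::'a \<times> 'a. (snd p, fst p)) \<in> measurable \<gamma> borel"
    by (subst measurable_cong_sets[OF c(2) refl]) (rule swm)
  have sg': "sets \<gamma>' = sets borel" unfolding \<gamma>'_def by simp
  have Dy': "disint_fst \<nu> Ky \<gamma>'" unfolding \<gamma>'_def by (rule disint_snd_swap[OF Dy c(2)])
  define Z' where "Z' = (\<lambda>p::'a \<times> 'a. zeta g (snd p, fst p))"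
  have Z'm: "(\<lambda>p. (fst p, Z' p)) \<in> measurable (borel :: ('a \<times> 'a) measure) borel"
    unfolding Z'_def zeta_def by measurable
  have dd: "distr \<gamma>' borel (\<lambda>p. (fst p, Z' p)) = distr \<gamma> borel (\<lambda>p. (snd p, zeta g p))"
    unfolding \<gamma>'_def by (subst distr_distr[OF Z'm swm']) (simp add: comp_def Z'_def)
  have D2': "disint_fst \<nu> K2 (distr \<gamma>' borel (\<lambda>p. (fst p, Z' p)))" unfolding dd by (rule D2)
  have fin': "(\<integral>\<^sup>+p. ennreal (norm (snd p) ^ 2) \<partial>\<gamma>') < \<infinity>"
  proof -
    have "(\<integral>\<^sup>+p. ennreal (norm (snd p) ^ 2) \<partial>\<gamma>') = (\<integral>\<^sup>+p. ennreal (norm (fst p) ^ 2) \<partial>\<gamma>)"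
      unfolding \<gamma>'_def by (subst nn_integral_distr[OF swm']) simp_all
    then show ?thesis using fin(1) by simp
  qed
  have Y: "(\<integral>\<^sup>+y. ennreal (1/2) * W2sq (Ky y) (K2 y) \<partial>\<nu>) =
        ennreal (1/2) * (\<integral>\<^sup>+p. ennreal (norm (snd p - Z' p) ^ 2) \<partial>\<gamma>')"
  proof (rule side_formula[OF Dy' D2' PN sN sg', where k = "\<lambda>x. (1/2) *\<^sub>R (x + (-1) *\<^sub>R g x)"
        and Tz = "\<lambda>y. (1/2) *\<^sub>R (y + 1 *\<^sub>R g y)" and \<phi>z = "\<lambda>y. (norm y ^ 2 + 2 * u y) / 4" and C = C])
    show "Z' (x, y) = (1/2) *\<^sub>R (x + (-1) *\<^sub>R g x) + (1/2) *\<^sub>R (y + 1 *\<^sub>R g y)" for x y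
      unfolding Z'_def zeta_def by (simp add: algebra_simps)
    show "(\<lambda>x. (1/2) *\<^sub>R (x + (-1) *\<^sub>R g x)) \<in> borel_measurable borel" by measurable
    show "continuous_on UNIV (\<lambda>y. (1/2) *\<^sub>R (y + 1 *\<^sub>R g y))" by (intro continuous_intros uc)
    show "continuous_on UNIV (\<lambda>y. (norm y ^ 2 + 2 * u y) / 4)" by (intro continuous_intros uc) auto
    show "(norm y ^ 2 + 2 * u y) / 4 + (1/2) *\<^sub>R (y + 1 *\<^sub>R g y) \<bullet> (y' - y) \<le> (norm y' ^ 2 + 2 * u y') / 4" for y y'
    proof -
      have c11: "- (u y' - u y - g y \<bullet> (y' - y)) \<le> (1/2) * norm (y' - y) ^ 2"
        using c11_bound[OF u, of y' y] abs_le_D2 by blast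
      have "norm (y' - y) ^ 2 = norm y' ^ 2 - 2 * (y \<bullet> y') + norm y ^ 2"
        by (simp add: power2_norm_eq_inner inner_diff_left inner_diff_right inner_commute)
      moreover have "norm y ^ 2 = y \<bullet> y" by (simp add: power2_norm_eq_inner)
      ultimately show ?thesis using c11
        by (simp add: inner_diff_left inner_diff_right inner_add_left inner_add_right inner_scaleR_left inner_scaleR_right field_simps inner_commute)
    qed
    show "norm ((1/2) *\<^sub>R (y + 1 *\<^sub>R g y)) \<le> C * (1 + norm y)" for y by (rule Tbd) simp
    show "\<bar>(norm y ^ 2 + 2 * u y) / 4\<bar> \<le> C * (1 + norm y ^ 2)" for y by (rule \<phi>bd) simp
    show "(\<integral>\<^sup>+p. ennreal (norm (snd p) ^ 2) \<partial>\<gamma>') < \<infinity>" by (rule fin')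
  qed
  have Y2: "(\<integral>\<^sup>+p. ennreal (norm (snd p - Z' p) ^ 2) \<partial>\<gamma>') = (\<integral>\<^sup>+p. ennreal (norm (fst p - zeta g p) ^ 2) \<partial>\<gamma>)"
  proof -
    have "(\<lambda>p::'a \<times> 'a. ennreal (norm (snd p - Z' p) ^ 2)) \<in> borel_measurable borel"
      unfolding Z'_def zeta_def by measurable
    then show ?thesis unfolding \<gamma>'_def by (subst nn_integral_distr[OF swm']) (simp_all add: Z'_def)
  qed
  have b1: "norm (fst p) \<le> 1 * Lg p" and b2: "norm (snd p) \<le> 1 * Lg p" for p :: "'a \<times> 'a"
    using Lg_ge(2)[of p] Lg_ge(3)[of p] by auto
  have bs: "norm (snd p - zeta g p) \<le> (norm (g 0) + 2) * Lg p" for p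
  proof -
    have "norm (snd p - zeta g p) \<le> norm (snd p) + norm (zeta g p)" by (rule norm_triangle_ineq4)
    also have "\<dots> \<le> 1 * Lg p + (norm (g 0) + 1) * Lg p" using b2[of p] zeta_bound[OF u, of p] by simp
    finally show ?thesis by (simp add: algebra_simps)
  qed
  have bf: "norm (fst p - zeta g p) \<le> (norm (g 0) + 2) * Lg p" for p
  proof -
    have "norm (fst p - zeta g p) \<le> norm (fst p) + norm (zeta g p)" by (rule norm_triangle_ineq4)
    also have "\<dots> \<le> 1 * Lg p + (norm (g 0) + 1) * Lg p" using b1[of p] zeta_bound[OF u, of p] by simp
    finally show ?thesis by (simp add: algebra_simps)
  qed
  have is1: "integrable \<gamma> (\<lambda>p. (snd p - zeta g p) \<bullet> (snd p - zeta g p))"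
    by (rule integrable_coupling_inner[OF gc M N _ _ bs bs]) measurable
  have is2: "integrable \<gamma> (\<lambda>p. (fst p - zeta g p) \<bullet> (fst p - zeta g p))"
    by (rule integrable_coupling_inner[OF gc M N _ _ bf bf]) measurable
  have i1: "integrable \<gamma> (\<lambda>p. norm (snd p - zeta g p) ^ 2)" using is1 by (simp add: power2_norm_eq_inner)
  have i2: "integrable \<gamma> (\<lambda>p. norm (fst p - zeta g p) ^ 2)" using is2 by (simp add: power2_norm_eq_inner)
  have n1: "(\<integral>\<^sup>+p. ennreal (norm (snd p - zeta g p) ^ 2) \<partial>\<gamma>) = ennreal (\<integral>p. norm (snd p - zeta g p) ^ 2 \<partial>\<gamma>)"
    using i1 by (intro nn_integral_eq_integral) auto
  have n2: "(\<integral>\<^sup>+p. ennreal (norm (fst p - zeta g p) ^ 2) \<partial>\<gamma>) = ennreal (\<integral>p. norm (fst p - zeta g p) ^ 2 \<partial>\<gamma>)"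
    using i2 by (intro nn_integral_eq_integral) auto
  have p1: "0 \<le> (\<integral>p. norm (snd p - zeta g p) ^ 2 \<partial>\<gamma>)" by simp
  have p2: "0 \<le> (\<integral>p. norm (fst p - zeta g p) ^ 2 \<partial>\<gamma>)" by simp
  have "Z2 \<mu> \<nu> = (\<integral>p. (1/2) * norm (snd p - zeta g p) ^ 2 + (1/2) * norm (fst p - zeta g p) ^ 2 \<partial>\<gamma>)"
    using cost_identity[OF M N opt G] by simp
  also have "\<dots> = (1/2) * (\<integral>p. norm (snd p - zeta g p) ^ 2 \<partial>\<gamma>) + (1/2) * (\<integral>p. norm (fst p - zeta g p) ^ 2 \<partial>\<gamma>)"
    using i1 i2 by simp
  finally have Zeq: "Z2 \<mu> \<nu> = (1/2) * (\<integral>p. norm (snd p - zeta g p) ^ 2 \<partial>\<gamma>) + (1/2) * (\<integral>p. norm (fst p - zeta g p) ^ 2 \<partial>\<gamma>)" .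
  define A where "A = (\<integral>p. norm (snd p - zeta g p) ^ 2 \<partial>\<gamma>)"
  define B where "B = (\<integral>p. norm (fst p - zeta g p) ^ 2 \<partial>\<gamma>)"
  have "ennreal ((1/2) * A + (1/2) * B) = ennreal ((1/2) * A) + ennreal ((1/2) * B)"
    using p1 p2 unfolding A_def B_def by (intro ennreal_plus) auto
  also have "\<dots> = ennreal (1/2) * ennreal A + ennreal (1/2) * ennreal B"
    by (simp only: ennreal_mult'[of "1/2" A] ennreal_mult'[of "1/2" B] divide_nonneg_nonneg zero_le_one zero_le_numeral)
  finally show ?thesis
    unfolding X Y Y2 n1 n2 Zeq A_def B_def .
qed

end
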